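(* For each $n\ge 1$ let $\mathcal{Q}_n:=\mathbb{K}[x_1,\dots,x_n]$, let $\mathrm{id}:=1\in\mathbb{K}[x_1]$, and for $P\in\mathcal{Q}_n$, $Q\in\mathcal{Q}_m$, $1\le i\le n$, define $$(P\circ_i Q)(x_1,\dots,x_{n+m-1}):=P(x_1,\dots,x_{i-1},\,x_i+\cdots+x_{i+m-1},\,x_{i+m},\dots,x_{n+m-1})\,Q(x_i,\dots,x_{i+m-1}).$$ Then $(\mathcal{Q}_n)_{n\ge1}$ with these partial compositions is a ns operad, and there is an isomorphism of ns operads $AsDer\cong\mathcal{Q}$ sending $\mathrm{id}\mapsto 1\in\mathbb{K}[x_1]$, $D\mapsto x_1\in\mathbb{K}[x_1]$ and $\mu\mapsto 1\in\mathbb{K}[x_1,x_2]$. Equivalently, the full composition is $$\gamma(P;Q_1,\dots,Q_k)(x_1,\dots,x_n)=P(x_1+\cdots+x_{i_1},\,x_{i_1+1}+\cdots+x_{i_1+i_2},\dots)\,Q_1(x_1,\dots,x_{i_1})\,Q_2(x_{i_1+1},\dots,x_{i_1+i_2})\cdots$$ for $P\in\mathcal{Q}_k$, $Q_r\in\mathcal{Q}_{i_r}$, $n=i_1+\cdots+i_k$. Under this isomorphism the $n$-ary operation $(a_1,\dots,a_n)\mapsto D^{j_1}(a_1)D^{j_2}(a_2)\cdots D^{j_n}(a_n)$ (i.e. $\mu_n\circ(D^{j_1},\dots,D^{j_n})$) corresponds to the monomial $x_1^{j_1}x_2^{j_2}\cdots x_n^{j_n}$; in particular $AsDer_n\cong\mathbb{K}[x_1,\dots,x_n]$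 as vector spaces.
   Context: $\mathbb{K}$ is a commutative unital ring (think of a field). A nonsymmetric (ns) operad is a family of vector spaces $(\mathcal{P}_n)_{n\ge1}$ with an element $\mathrm{id}\in\mathcal{P}_1$ and linear partial compositions $\circ_i:\mathcal{P}_m\otimes\mathcal{P}_n\to\mathcal{P}_{m+n-1}$ ($1\le i\le m$) such that $\mathrm{id}$ is a two-sided unit and (I) $(\lambda\circ_i\mu)\circ_{i-1+j}\nu=\lambda\circ_i(\mu\circ_j\nu)$ for $\lambda\in\mathcal{P}_l,\mu\in\mathcal{P}_m$, $1\le i\le l$, $1\le j\le m$; (II) $(\lambda\circ_i\mu)\circ_{k+m-1}\nu=(\lambda\circ_k\nu)\circ_i\mu$ for $1\le i<k\le l$. $AsDer$ denotes the ns operad generated by a unary operation $D$ and a binary operation $\mu$ subject to the relations $\mu\circ_1\mu=\mu\circ_2\mu$ (associativity) and $D\circ_1\mu=\mu\circ_1 D+\mu\circ_2 D$ (Leibniz rule); its algebras are (nonunital) associative algebras $A$ equipped with a derivation $D^A$, i.e. a linear map with $D^A(ab)=D^A(a)b+aD^A(b)$. $\mu_n$ denotes the $n$-ary operation obtained by composing $n-1$ copies of $\mu$ ($\mu_1=\mathrm{id}$). *)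

theory Defs
  imports "HOL-Library.Poly_Mapping"
begin

text \<open>An ns operad of K-modules is given by: a type 'b with an abelian group structure and a
  scalar multiplication sc by the coefficient ring 'k (a K-module), arity components C n
  (submodules of 'b, only n \<ge> 1 matter), a unit e \<in> C 1 and partial compositions
  cmp m n i x y = x \<circ>_i y for x \<in> C m, y \<in> C n, 1 \<le> i \<le> m.
  The arities are passed explicitly, so components may share elements.\<close>

definition is_module_scalar :: "('k::comm_ring_1 \<Rightarrow> 'b::ab_group_add \<Rightarrow> 'b) \<Rightarrow> bool" where
  "is_module_scalar sc \<longleftrightarrow>
     (\<forall>a x y. sc a (x + y) = sc a x + sc a y) \<and>
     (\<forall>a b x. sc (a + b) x = sc a x + sc b x) \<and>
     (\<forall>a b x. sc (a * b) x = sc a (sc b x)) \<and>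
     (\<forall>x. sc 1 x = x)"

definition ns_operad ::
  "('k::comm_ring_1 \<Rightarrow> 'b::ab_group_add \<Rightarrow> 'b) \<Rightarrow> (nat \<Rightarrow> 'b set) \<Rightarrow> 'b
     \<Rightarrow> (nat \<Rightarrow> nat \<Rightarrow> nat \<Rightarrow> 'b \<Rightarrow> 'b \<Rightarrow> 'b) \<Rightarrow> bool" where
  "ns_operad sc C e cmp \<longleftrightarrow>
     is_module_scalar sc \<and>
     \<comment> \<open>each component is a submodule\<close>
     (\<forall>n\<ge>1. 0 \<in> C n \<and> (\<forall>x\<in>C n. \<forall>y\<in>C n. x + y \<in> C n) \<and> (\<forall>a. \<forall>x\<in>C n. sc a x \<in> C n)) \<and>
     \<comment> \<open>partial compositions are well typed and bilinear\<close>
     (\<forall>m\<ge>1. \<forall>n\<ge>1. \<forall>i. 1 \<le> i \<and> i \<le> m \<longrightarrow>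
        (\<forall>x\<in>C m. \<forall>y\<in>C n. cmp m n i x y \<in> C (m + n - 1)) \<and>
        (\<forall>x\<in>C m. \<forall>x'\<in>C m. \<forall>y\<in>C n. cmp m n i (x + x') y = cmp m n i x y + cmp m n i x' y) \<and>
        (\<forall>x\<in>C m. \<forall>y\<in>C n. \<forall>y'\<in>C n. cmp m n i x (y + y') = cmp m n i x y + cmp m n i x y') \<and>
        (\<forall>a. \<forall>x\<in>C m. \<forall>y\<in>C n. cmp m n i (sc a x) y = sc a (cmp m n i x y)) \<and>
        (\<forall>a. \<forall>x\<in>C m. \<forall>y\<in>C n. cmp m n i x (sc a y) = sc a (cmp m n i x y))) \<and>
     \<comment> \<open>unit\<close>
     e \<in> C 1 \<and>
     (\<forall>n\<ge>1. \<forall>y\<in>C n. cmp 1 n 1 e y = y) \<and>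
     (\<forall>m\<ge>1. \<forall>x\<in>C m. \<forall>i. 1 \<le> i \<and> i \<le> m \<longrightarrow> cmp m 1 i x e = x) \<and>
     \<comment> \<open>axiom (I)\<close>
     (\<forall>l\<ge>1. \<forall>m\<ge>1. \<forall>n\<ge>1. \<forall>x\<in>C l. \<forall>y\<in>C m. \<forall>z\<in>C n. \<forall>i j.
        1 \<le> i \<and> i \<le> l \<and> 1 \<le> j \<and> j \<le> m \<longrightarrow>
        cmp (l + m - 1) n (i - 1 + j) (cmp l m i x y) z = cmp l (m + n - 1) i x (cmp m n j y z)) \<and>
     \<comment> \<open>axiom (II)\<close>
     (\<forall>l\<ge>1. \<forall>m\<ge>1. \<forall>n\<ge>1. \<forall>x\<in>C l. \<forall>y\<in>C m. \<forall>z\<in>C n. \<forall>i k.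
        1 \<le> i \<and> i < k \<and> k \<le> l \<longrightarrow>
        cmp (l + m - 1) n (k + m - 1) (cmp l m i x y) z = cmp (l + n - 1) m i (cmp l n k x z) y)"

definition ns_operad_hom ::
  "('k::comm_ring_1 \<Rightarrow> 'a::ab_group_add \<Rightarrow> 'a) \<Rightarrow> (nat \<Rightarrow> 'a set) \<Rightarrow> 'a \<Rightarrow> (nat \<Rightarrow> nat \<Rightarrow> nat \<Rightarrow> 'a \<Rightarrow> 'a \<Rightarrow> 'a)
   \<Rightarrow> ('k \<Rightarrow> 'b::ab_group_add \<Rightarrow> 'b) \<Rightarrow> (nat \<Rightarrow> 'b set) \<Rightarrow> 'b \<Rightarrow> (nat \<Rightarrow> nat \<Rightarrow> nat \<Rightarrow> 'b \<Rightarrow> 'b \<Rightarrow> 'b)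
   \<Rightarrow> (nat \<Rightarrow> 'a \<Rightarrow> 'b) \<Rightarrow> bool" where
  "ns_operad_hom sc C e cmp sc' C' e' cmp' f \<longleftrightarrow>
     (\<forall>n\<ge>1. \<forall>x\<in>C n. f n x \<in> C' n) \<and>
     (\<forall>n\<ge>1. \<forall>x\<in>C n. \<forall>y\<in>C n. f n (x + y) = f n x + f n y) \<and>
     (\<forall>n\<ge>1. \<forall>a. \<forall>x\<in>C n. f n (sc a x) = sc' a (f n x)) \<and>
     f 1 e = e' \<and>
     (\<forall>m\<ge>1. \<forall>n\<ge>1. \<forall>i. 1 \<le> i \<and> i \<le> m \<longrightarrow>
        (\<forall>x\<in>C m. \<forall>y\<in>C n. f (m + n - 1) (cmp m n i x y) = cmp' m n i (f m x) (f n y)))"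

text \<open>The defining relations of AsDer for candidate images d (of D, arity 1) and
  m (of \<mu>, arity 2): associativity and the Leibniz rule.\<close>

definition asder_relations :: "(nat \<Rightarrow> nat \<Rightarrow> nat \<Rightarrow> 'b \<Rightarrow> 'b \<Rightarrow> 'b) \<Rightarrow> 'b \<Rightarrow> 'b::ab_group_add \<Rightarrow> bool" where
  "asder_relations cmp d m \<longleftrightarrow>
     cmp 2 2 1 m m = cmp 2 2 2 m m \<and>
     cmp 1 2 1 d m = cmp 2 1 1 m d + cmp 2 1 2 m d"

text \<open>AsDer is the ns operad presented by generators D (arity 1), \<mu> (arity 2) and these
  relations, i.e. it is characterised by its universal property.  "An ns operad P with elements
  d \<in> P_1, m \<in> P_2 is isomorphic to AsDer via D \<mapsto> d, \<mu> \<mapsto> m" means: the relations hold for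
  (d, m) and for every ns operad P' and d' \<in> P'_1, m' \<in> P'_2 satisfying the relations there is a
  unique morphism P \<rightarrow> P' with d \<mapsto> d', m \<mapsto> m'.  Since the target type 'b is a parameter,
  this is stated for the target type given as an argument (the theorem is schematic in it).\<close>

definition presents_AsDer ::
  "('k::comm_ring_1 \<Rightarrow> 'a::ab_group_add \<Rightarrow> 'a) \<Rightarrow> (nat \<Rightarrow> 'a set) \<Rightarrow> 'a \<Rightarrow> (nat \<Rightarrow> nat \<Rightarrow> nat \<Rightarrow> 'a \<Rightarrow> 'a \<Rightarrow> 'a)
   \<Rightarrow> 'a \<Rightarrow> 'a \<Rightarrow> 'b::ab_group_add itself \<Rightarrow> bool" where
  "presents_AsDer sc C e cmp d m _ \<longleftrightarrow>
     d \<in> C 1 \<and> m \<in> C 2 \<and> asder_relations cmp d m \<and>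
     (\<forall>(sc' :: 'k \<Rightarrow> 'b \<Rightarrow> 'b) C' e' cmp' d' m'.
        ns_operad sc' C' e' cmp' \<and> d' \<in> C' 1 \<and> m' \<in> C' 2 \<and> asder_relations cmp' d' m' \<longrightarrow>
        (\<exists>f. ns_operad_hom sc C e cmp sc' C' e' cmp' f \<and> f 1 d = d' \<and> f 2 m = m') \<and>
        (\<forall>f g. ns_operad_hom sc C e cmp sc' C' e' cmp' f \<and> f 1 d = d' \<and> f 2 m = m' \<and>
               ns_operad_hom sc C e cmp sc' C' e' cmp' g \<and> g 1 d = d' \<and> g 2 m = m' \<longrightarrow>
               (\<forall>n\<ge>1. \<forall>x\<in>C n. f n x = g n x)))"

text \<open>Full composition \<gamma>(P; Q_1,...,Q_k), obtained from partial compositions as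
  (\<dots>((P \<circ>_k Q_k) \<circ>_(k-1) Q_(k-1)) \<dots>) \<circ>_1 Q_1.  The list argument of full_comp_aux is the
  reversed list of (arity, element) pairs.\<close>

fun full_comp_aux :: "(nat \<Rightarrow> nat \<Rightarrow> nat \<Rightarrow> 'b \<Rightarrow> 'b \<Rightarrow> 'b) \<Rightarrow> nat \<Rightarrow> 'b \<Rightarrow> (nat \<times> 'b) list \<Rightarrow> 'b" where
  "full_comp_aux cmp a P [] = P"
| "full_comp_aux cmp a P ((m, Q) # qs) =
     full_comp_aux cmp (a + m - 1) (cmp a m (length qs + 1) P Q) qs"

definition full_comp :: "(nat \<Rightarrow> nat \<Rightarrow> nat \<Rightarrow> 'b \<Rightarrow> 'b \<Rightarrow> 'b) \<Rightarrow> nat \<Rightarrow> 'b \<Rightarrow> (nat \<times> 'b) list \<Rightarrow> 'b" where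
  "full_comp cmp k P qs = full_comp_aux cmp k P (rev qs)"

fun op_pow :: "(nat \<Rightarrow> nat \<Rightarrow> nat \<Rightarrow> 'b \<Rightarrow> 'b \<Rightarrow> 'b) \<Rightarrow> 'b \<Rightarrow> 'b \<Rightarrow> nat \<Rightarrow> 'b" where
  "op_pow cmp e d 0 = e"
| "op_pow cmp e d (Suc j) = cmp 1 1 1 d (op_pow cmp e d j)"

text \<open>\<mu>_1 = id, \<mu>_(n+1) = \<mu> \<circ>_2 \<mu>_n (so \<mu>_2 = \<mu>).  The value at 0 is irrelevant.\<close>
fun mu_n :: "(nat \<Rightarrow> nat \<Rightarrow> nat \<Rightarrow> 'b \<Rightarrow> 'b \<Rightarrow> 'b) \<Rightarrow> 'b \<Rightarrow> 'b \<Rightarrow> nat \<Rightarrow> 'b" where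
  "mu_n cmp e m 0 = e"
| "mu_n cmp e m (Suc 0) = e"
| "mu_n cmp e m (Suc (Suc n)) = cmp 2 (Suc n) 2 m (mu_n cmp e m (Suc n))"

text \<open>Polynomials over 'k in variables x_1, x_2, ... (variable index v \<ge> 1), represented
  as finitely supported maps from monomials (exponent maps a finitely supported map nat to nat) to coefficients.\<close>

type_synonym 'k mpoly = "(nat \<Rightarrow>\<^sub>0 nat) \<Rightarrow>\<^sub>0 'k"

definition Var :: "nat \<Rightarrow> 'k::comm_ring_1 mpoly" where
  "Var v = Poly_Mapping.single (Poly_Mapping.single v 1) 1"

definition Const :: "'k::comm_ring_1 \<Rightarrow> 'k mpoly" where
  "Const c = Poly_Mapping.single 0 c"

definition poly_smult :: "'k::comm_ring_1 \<Rightarrow> 'k mpoly \<Rightarrow> 'k mpoly" where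
  "poly_smult c p = Const c * p"

definition subst :: "(nat \<Rightarrow> 'k::comm_ring_1 mpoly) \<Rightarrow> 'k mpoly \<Rightarrow> 'k mpoly" where
  "subst \<sigma> p = (\<Sum>a\<in>Poly_Mapping.keys p.
      Const (Poly_Mapping.lookup p a) * (\<Prod>v\<in>Poly_Mapping.keys a. \<sigma> v ^ Poly_Mapping.lookup a v))"

definition Qc :: "nat \<Rightarrow> 'k::comm_ring_1 mpoly set" where
  "Qc n = {p. \<forall>a\<in>Poly_Mapping.keys p. \<forall>v\<in>Poly_Mapping.keys a. 1 \<le> v \<and> v \<le> n}"

definition Qcomp :: "nat \<Rightarrow> nat \<Rightarrow> nat \<Rightarrow> 'k::comm_ring_1 mpoly \<Rightarrow> 'k mpoly \<Rightarrow> 'k mpoly" where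
  "Qcomp n m i P Q =
     subst (\<lambda>v. if v < i then Var v
                else if v = i then (\<Sum>j\<in>{i..i + m - 1}. Var j)
                else Var (v + m - 1)) P
     * subst (\<lambda>v. Var (v + i - 1)) Q"

end

theory Submission
  imports Defs
begin

lemma Const_add: "Const (a + b) = Const a + Const (b::'k::comm_ring_1)"
  by (simp add: Const_def single_add)
lemma Const_mult: "Const (a * b) = Const a * Const (b::'k::comm_ring_1)"
  by (simp add: Const_def mult_single)
lemma Const_0[simp]: "Const 0 = (0::'k::comm_ring_1 mpoly)" by (simp add: Const_def)
lemma Const_1[simp]: "Const 1 = (1::'k::comm_ring_1 mpoly)" by (simp add: Const_def)

lemma poly_sum_single: "p = (\<Sum>a\<in>Poly_Mapping.keys p. Poly_Mapping.single a (Poly_Mapping.lookup p a))"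
  by (rule poly_mapping_eqI) (auto simp: lookup_sum lookup_single when_def in_keys_iff sum.delta)

definition mono :: "(nat \<Rightarrow> 'k::comm_ring_1 mpoly) \<Rightarrow> (nat \<Rightarrow>\<^sub>0 nat) \<Rightarrow> 'k mpoly" where
  "mono \<sigma> a = (\<Prod>v\<in>Poly_Mapping.keys a. \<sigma> v ^ Poly_Mapping.lookup a v)"

lemma mono_superset: "finite S \<Longrightarrow> Poly_Mapping.keys a \<subseteq> S \<Longrightarrow>
   mono \<sigma> a = (\<Prod>v\<in>S. \<sigma> v ^ Poly_Mapping.lookup a v)"
  unfolding mono_def by (rule prod.mono_neutral_left) (auto simp: in_keys_iff)

lemma mono_0[simp]: "mono \<sigma> 0 = 1" by (simp add: mono_def)

lemma mono_add: "mono \<sigma> (a + b) = mono \<sigma> a * mono \<sigma> b"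
proof -
  let ?S = "Poly_Mapping.keys a \<union> Poly_Mapping.keys b"
  have "mono \<sigma> (a + b) = (\<Prod>v\<in>?S. \<sigma> v ^ Poly_Mapping.lookup (a+b) v)"
    by (rule mono_superset) (auto simp: keys_add)
  also have "\<dots> = (\<Prod>v\<in>?S. \<sigma> v ^ Poly_Mapping.lookup a v) * (\<Prod>v\<in>?S. \<sigma> v ^ Poly_Mapping.lookup b v)"
    by (simp add: lookup_add power_add prod.distrib)
  also have "\<dots> = mono \<sigma> a * mono \<sigma> b"
    by (simp add: mono_superset[symmetric])
  finally show ?thesis .
qed

lemma subst_mono_def: "subst \<sigma> p = (\<Sum>a\<in>Poly_Mapping.keys p. Const (Poly_Mapping.lookup p a) * mono \<sigma> a)"
  by (simp add: subst_def mono_def)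

lemma subst_superset: "finite S \<Longrightarrow> Poly_Mapping.keys p \<subseteq> S \<Longrightarrow>
   subst \<sigma> p = (\<Sum>a\<in>S. Const (Poly_Mapping.lookup p a) * mono \<sigma> a)"
  unfolding subst_mono_def by (rule sum.mono_neutral_left) (auto simp: in_keys_iff)

lemma subst_0[simp]: "subst \<sigma> 0 = 0" by (simp add: subst_def)

lemma subst_add: "subst \<sigma> (p + q) = subst \<sigma> p + subst \<sigma> q"
proof -
  let ?S = "Poly_Mapping.keys p \<union> Poly_Mapping.keys q"
  have "subst \<sigma> (p + q) = (\<Sum>a\<in>?S. Const (Poly_Mapping.lookup (p+q) a) * mono \<sigma> a)"
    by (rule subst_superset) (auto simp: keys_add)
  also have "\<dots> = (\<Sum>a\<in>?S. Const (Poly_Mapping.lookup p a) * mono \<sigma> a) + (\<Sum>a\<in>?S. Const (Poly_Mapping.lookup q a) * mono \<sigma> a)"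
    by (simp add: lookup_add Const_add distrib_right sum.distrib)
  also have "\<dots> = subst \<sigma> p + subst \<sigma> q"
    by (simp add: subst_superset[symmetric])
  finally show ?thesis .
qed

lemma subst_sum: "subst \<sigma> (\<Sum>x\<in>A. f x) = (\<Sum>x\<in>A. subst \<sigma> (f x))"
  by (induction A rule: infinite_finite_induct) (auto simp: subst_add)

lemma subst_single: "subst \<sigma> (Poly_Mapping.single a c) = Const c * mono \<sigma> a"
  by (simp add: subst_mono_def)


lemma subst_mult: "subst \<sigma> (p * q) = subst \<sigma> p * subst \<sigma> q"
proof -
  let ?sp = "\<lambda>a. Poly_Mapping.single a (Poly_Mapping.lookup p a)"
  let ?sq = "\<lambda>b. Poly_Mapping.single b (Poly_Mapping.lookup q b)"
  have "p * q = (\<Sum>a\<in>Poly_Mapping.keys p. ?sp a) * (\<Sum>b\<in>Poly_Mapping.keys q. ?sq b)"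
    by (metis poly_sum_single)
  also have "\<dots> = (\<Sum>a\<in>Poly_Mapping.keys p. \<Sum>b\<in>Poly_Mapping.keys q. ?sp a * ?sq b)"
    by (simp add: sum_product)
  finally have "subst \<sigma> (p * q) = (\<Sum>a\<in>Poly_Mapping.keys p. \<Sum>b\<in>Poly_Mapping.keys q. subst \<sigma> (?sp a) * subst \<sigma> (?sq b))"
    by (simp add: subst_sum mult_single subst_single mono_add Const_mult mult_ac)
  also have "\<dots> = subst \<sigma> (\<Sum>a\<in>Poly_Mapping.keys p. ?sp a) * subst \<sigma> (\<Sum>b\<in>Poly_Mapping.keys q. ?sq b)"
    by (simp only: subst_sum sum_product)
  also have "\<dots> = subst \<sigma> p * subst \<sigma> q"
    by (metis poly_sum_single)
  finally show ?thesis .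
qed

lemma subst_Const[simp]: "subst \<sigma> (Const c) = Const c"
  by (simp add: Const_def subst_single)
lemma subst_1[simp]: "subst \<sigma> 1 = 1"
  using subst_Const[of \<sigma> 1] by simp
lemma subst_Var[simp]: "subst \<sigma> (Var v) = \<sigma> v"
  by (simp add: Var_def subst_single mono_def)

lemma subst_prod: "subst \<sigma> (\<Prod>x\<in>A. f x) = (\<Prod>x\<in>A. subst \<sigma> (f x))"
  by (induction A rule: infinite_finite_induct) (auto simp: subst_mult)
lemma subst_power: "subst \<sigma> (p ^ k) = subst \<sigma> p ^ k"
  by (induction k) (auto simp: subst_mult)

lemma subst_mono: "subst \<sigma> (mono \<tau> a) = mono (\<lambda>v. subst \<sigma> (\<tau> v)) a"
  by (simp add: mono_def subst_prod subst_power)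

lemma subst_subst: "subst \<sigma> (subst \<tau> p) = subst (\<lambda>v. subst \<sigma> (\<tau> v)) p"
  by (simp add: subst_mono_def[of \<tau>] subst_sum subst_mult subst_mono) (simp add: subst_mono_def)

lemma subst_cong: "(\<And>a v. a \<in> Poly_Mapping.keys p \<Longrightarrow> v \<in> Poly_Mapping.keys a \<Longrightarrow> \<sigma> v = \<tau> v) \<Longrightarrow>
   subst \<sigma> p = subst \<tau> p"
  unfolding subst_def by (intro sum.cong refl arg_cong2[where f="(*)"] prod.cong) auto

lemma Var_power: "Var v ^ k = (Poly_Mapping.single (Poly_Mapping.single v k) 1 :: 'k::comm_ring_1 mpoly)"
  by (induction k) (auto simp: Var_def mult_single single_add[symmetric] mult.commute)

lemma prod_single1: "(\<Prod>v\<in>S. Poly_Mapping.single (f v) (1::'k::comm_ring_1)) = Poly_Mapping.single (\<Sum>v\<in>S. f v) 1"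
  by (induction S rule: infinite_finite_induct) (auto simp: mult_single)

lemma mono_Var: "mono Var a = (Poly_Mapping.single a 1 :: 'k::comm_ring_1 mpoly)"
proof -
  have "mono Var a = (Poly_Mapping.single (\<Sum>v\<in>Poly_Mapping.keys a. Poly_Mapping.single v (Poly_Mapping.lookup a v)) 1 :: 'k mpoly)"
    by (simp add: mono_def Var_power prod_single1)
  then show ?thesis by (metis poly_sum_single)
qed

lemma Const_single: "Const c * Poly_Mapping.single a 1 = Poly_Mapping.single a c"
  by (simp add: Const_def mult_single)

lemma subst_Var_id[simp]: "subst Var p = p"
  by (simp add: subst_mono_def mono_Var Const_single) (metis poly_sum_single)

lemma subst_Var_id': "(\<And>v. \<sigma> v = Var v) \<Longrightarrow> subst \<sigma> p = p"
  by (metis subst_Var_id ext)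

lemma Qc_0[simp]: "0 \<in> Qc n" by (simp add: Qc_def)
lemma Qc_add[intro]: "p \<in> Qc n \<Longrightarrow> q \<in> Qc n \<Longrightarrow> p + q \<in> Qc n"
  unfolding Qc_def by (auto dest!: subsetD[OF keys_add])
lemma keys_add_nat: "Poly_Mapping.keys ((a::nat\<Rightarrow>\<^sub>0nat) + b) \<subseteq> Poly_Mapping.keys a \<union> Poly_Mapping.keys b"
  by (rule keys_add)
lemma Qc_mult[intro]: "p \<in> Qc n \<Longrightarrow> q \<in> Qc n \<Longrightarrow> p * q \<in> Qc n"
proof (unfold Qc_def, intro CollectI ballI)
  fix a v assume "p \<in> {p. \<forall>a\<in>Poly_Mapping.keys p. \<forall>v\<in>Poly_Mapping.keys a. 1 \<le> v \<and> v \<le> n}"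
     "q \<in> {p. \<forall>a\<in>Poly_Mapping.keys p. \<forall>v\<in>Poly_Mapping.keys a. 1 \<le> v \<and> v \<le> n}"
     "a \<in> Poly_Mapping.keys (p * q)" "v \<in> Poly_Mapping.keys a"
  moreover from keys_mult[of p q] this(3) obtain b c where "a = b + c" "b \<in> Poly_Mapping.keys p" "c \<in> Poly_Mapping.keys q" by blast
  ultimately show "1 \<le> v \<and> v \<le> n" using keys_add_nat[of b c] by auto
qed
lemma Qc_Const[intro, simp]: "Const c \<in> Qc n" by (simp add: Qc_def Const_def)
lemma Qc_1[intro, simp]: "1 \<in> Qc n" by (simp add: Qc_def)
lemma Qc_Var[intro]: "1 \<le> v \<Longrightarrow> v \<le> n \<Longrightarrow> Var v \<in> Qc n" by (simp add: Qc_def Var_def)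
lemma Qc_sum[intro]: "(\<And>x. x \<in> A \<Longrightarrow> f x \<in> Qc n) \<Longrightarrow> (\<Sum>x\<in>A. f x) \<in> Qc n"
  by (induction A rule: infinite_finite_induct) auto
lemma Qc_prod[intro]: "(\<And>x. x \<in> A \<Longrightarrow> f x \<in> Qc n) \<Longrightarrow> (\<Prod>x\<in>A. f x) \<in> Qc n"
  by (induction A rule: infinite_finite_induct) auto
lemma Qc_power[intro]: "p \<in> Qc n \<Longrightarrow> p ^ k \<in> Qc n"
  by (induction k) auto
lemma Qc_mono: "p \<in> Qc n \<Longrightarrow> n \<le> n' \<Longrightarrow> p \<in> Qc n'"
  unfolding Qc_def by force
lemma Qc_subst:
  assumes p: "p \<in> Qc n" and s: "\<And>v. 1 \<le> v \<Longrightarrow> v \<le> n \<Longrightarrow> \<sigma> v \<in> Qc m"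
  shows "subst \<sigma> p \<in> Qc m"
  unfolding subst_def
proof (intro Qc_sum Qc_mult Qc_Const Qc_prod Qc_power)
  fix a v assume "a \<in> Poly_Mapping.keys p" "v \<in> Poly_Mapping.keys a"
  with p have "1 \<le> v \<and> v \<le> n" by (auto simp: Qc_def)
  with s show "\<sigma> v \<in> Qc m" by auto
qed
lemma Qc_smult[intro]: "p \<in> Qc n \<Longrightarrow> poly_smult c p \<in> Qc n"
  by (auto simp: poly_smult_def)
lemma subst_cong_Qc: "p \<in> Qc n \<Longrightarrow> (\<And>v. 1 \<le> v \<Longrightarrow> v \<le> n \<Longrightarrow> \<sigma> v = \<tau> v) \<Longrightarrow> subst \<sigma> p = subst \<tau> p"
  by (rule subst_cong) (auto simp: Qc_def)


definition rho :: "nat \<Rightarrow> nat \<Rightarrow> nat \<Rightarrow> 'k::comm_ring_1 mpoly" where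
  "rho m i v = (if v < i then Var v else if v = i then (\<Sum>t<m. Var (i + t)) else Var (v + m - 1))"
definition shv :: "nat \<Rightarrow> nat \<Rightarrow> 'k::comm_ring_1 mpoly" where
  "shv i v = Var (v + i - 1)"

lemma block_sum: "1 \<le> (i::nat) \<Longrightarrow> sum f {i..i + m - 1} = (\<Sum>t<m. f (i + t))"
proof -
  assume "1 \<le> i"
  then have "{i..i + m - 1} = {0 + i..<m + i}" by auto
  then have "sum f {i..i + m - 1} = (\<Sum>t\<in>{0..<m}. f (t + i))"
    by (simp only: sum.shift_bounds_nat_ivl)
  then show ?thesis by (simp add: atLeast0LessThan add.commute)
qed

lemma Qcomp_eq: "1 \<le> i \<Longrightarrow> Qcomp n m i P Q = subst (rho m i) P * subst (shv i) Q"
proof -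
  assume "1 \<le> i"
  then have e: "sum Var {i..i + m - 1} = (\<Sum>t<m. Var (i + t))" by (rule block_sum)
  show ?thesis by (unfold Qcomp_def rho_def shv_def e) (rule refl)
qed

lemma sum_split_add: "(\<Sum>t<a + (b::nat). f t) = (\<Sum>t<a. f t) + (\<Sum>t<b. f (a + t))"
  by (induction b) (auto simp: add_ac)

lemma subst_sumVar: "subst \<sigma> (\<Sum>t<m. Var (i + t)) = (\<Sum>t<m. \<sigma> (i + t))"
  by (simp add: subst_sum)

lemma rho_Qc: "1 \<le> v \<Longrightarrow> v \<le> l \<Longrightarrow> 1 \<le> i \<Longrightarrow> i \<le> l \<Longrightarrow> 1 \<le> m \<Longrightarrow> rho m i v \<in> Qc (l + m - 1)"
  unfolding rho_def by (auto intro!: Qc_sum Qc_Var)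

lemma shv_Qc: "1 \<le> v \<Longrightarrow> v \<le> m \<Longrightarrow> 1 \<le> i \<Longrightarrow> i \<le> l \<Longrightarrow> shv i v \<in> Qc (l + m - 1)"
  unfolding shv_def by (auto intro!: Qc_Var)

lemma Qcomp_Qc: "x \<in> Qc l \<Longrightarrow> y \<in> Qc m \<Longrightarrow> 1 \<le> i \<Longrightarrow> i \<le> l \<Longrightarrow> 1 \<le> m \<Longrightarrow>
  Qcomp l m i x y \<in> Qc (l + m - 1)"
proof -
  assume a: "x \<in> Qc l" "y \<in> Qc m" "1 \<le> i" "i \<le> l" "1 \<le> m"
  have "subst (rho m i) x \<in> Qc (l + m - 1)"
    by (rule Qc_subst[OF a(1)], rule rho_Qc) (use a in auto)
  moreover have "subst (shv i) y \<in> Qc (l + m - 1)"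
    by (rule Qc_subst[OF a(2)], rule shv_Qc) (use a in auto)
  ultimately show ?thesis using a by (simp add: Qcomp_eq Qc_mult)
qed

lemma Qcomp_add1: "1 \<le> i \<Longrightarrow> Qcomp l m i (x + x') y = Qcomp l m i x y + Qcomp l m i x' y"
  by (simp add: Qcomp_eq subst_add distrib_right)
lemma Qcomp_add2: "1 \<le> i \<Longrightarrow> Qcomp l m i x (y + y') = Qcomp l m i x y + Qcomp l m i x y'"
  by (simp add: Qcomp_eq subst_add distrib_left)
lemma Qcomp_sc1: "1 \<le> i \<Longrightarrow> Qcomp l m i (poly_smult a x) y = poly_smult a (Qcomp l m i x y)"
  by (simp add: Qcomp_eq poly_smult_def subst_mult mult_ac)
lemma Qcomp_sc2: "1 \<le> i \<Longrightarrow> Qcomp l m i x (poly_smult a y) = poly_smult a (Qcomp l m i x y)"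
  by (simp add: Qcomp_eq poly_smult_def subst_mult mult_ac)

lemma Qcomp_unit1: "y \<in> Qc n \<Longrightarrow> Qcomp 1 n 1 1 y = y"
  by (simp add: Qcomp_eq, rule subst_Var_id') (simp add: shv_def)

lemma Qcomp_unit2: "1 \<le> i \<Longrightarrow> Qcomp l 1 i x 1 = x"
  by (simp add: Qcomp_eq, rule subst_Var_id') (simp add: rho_def)

lemma QaxI:
  fixes x :: "'k::comm_ring_1 mpoly"
  assumes l: "1 \<le> l" and m: "1 \<le> m" and n: "1 \<le> n"
    and x: "x \<in> Qc l" and y: "y \<in> Qc m" and z: "z \<in> Qc n"
    and i: "1 \<le> i" "i \<le> l" and j: "1 \<le> j" "j \<le> m"
  shows "Qcomp (l + m - 1) n (i - 1 + j) (Qcomp l m i x y) z = Qcomp l (m + n - 1) i x (Qcomp m n j y z)"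
proof -
  define p where "p = i - 1 + j"
  have p: "1 \<le> p" "i \<le> p" "p \<le> i + m - 1" "p = i + (j - 1)" using i j by (auto simp: p_def)
  have X: "subst (rho n p) (rho m i v) = (rho (m + n - 1) i v :: 'k mpoly)" if "1 \<le> v" "v \<le> l" for v
  proof (cases "v < i")
    case True then show ?thesis using p by (simp add: rho_def)
  next
    case False
    show ?thesis
    proof (cases "v = i")
      case True
      have mm: "m = (j - 1) + Suc (m - j)" and mn: "m + n - 1 = (j - 1) + n + (m - j)" using j n by auto
      have "subst (rho n p) (rho m i v) = (\<Sum>t<m. rho n p (i + t) :: 'k mpoly)"
        using True by (simp add: rho_def subst_sum)
      also have "\<dots> = (\<Sum>t<j - 1. rho n p (i + t)) + rho n p p + (\<Sum>t<m - j. rho n p (p + 1 + t))"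
        by (subst mm, simp only: sum_split_add sum.lessThan_Suc_shift) (simp add: p(4) add_ac)
      also have "\<dots> = (\<Sum>t<j - 1. Var (i + t)) + (\<Sum>t<n. Var (p + t)) + (\<Sum>t<m - j. Var (p + n + t))"
      proof -
        have "(\<Sum>t<j - 1. rho n p (i + t)) = (\<Sum>t<j - 1. Var (i + t) :: 'k mpoly)"
          by (rule sum.cong) (auto simp: rho_def p(4))
        moreover have "(\<Sum>t<m - j. rho n p (p + 1 + t)) = (\<Sum>t<m - j. Var (p + n + t) :: 'k mpoly)"
          by (rule sum.cong) (auto simp: rho_def add_ac)
        moreover have "rho n p p = (\<Sum>t<n. Var (p + t) :: 'k mpoly)" by (simp add: rho_def)
        ultimately show ?thesis by simp
      qed
      also have "\<dots> = (\<Sum>t<m + n - 1. Var (i + t))"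
        by (subst mn, simp only: sum_split_add) (simp add: p(4) add_ac)
      finally show ?thesis using True by (simp add: rho_def)
    next
      case False
      with \<open>\<not> v < i\<close> have "v > i" by auto
      then have "\<not> v + m - 1 < p" "v + m - 1 \<noteq> p" "v + m - 1 + n - 1 = v + (m + n - 1) - 1"
        using p m n by auto
      then show ?thesis using \<open>v > i\<close> by (simp add: rho_def)
    qed
  qed
  have Y: "subst (rho n p) (shv i v) = (subst (shv i) (rho n j v) :: 'k mpoly)" if "1 \<le> v" "v \<le> m" for v
  proof -
    consider "v < j" | "v = j" | "v > j" by linarith
    then show ?thesis
    proof cases
      case 1
      then have "v + i - 1 < p" "v + i - 1 \<noteq> p" "v < j" using p i j that by auto
      then show ?thesis by (simp add: rho_def shv_def)
    next
      case 2
      then have "v + i - 1 = p" using p i j that by auto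
      have "subst (rho n p) (shv i v) = (\<Sum>t<n. Var (p + t) :: 'k mpoly)"
        using \<open>v + i - 1 = p\<close> by (simp add: rho_def shv_def)
      also have "\<dots> = (\<Sum>t<n. Var (j + t + i - 1))"
        by (rule sum.cong) (use p i j in \<open>auto simp: ac_simps\<close>)
      also have "\<dots> = subst (shv i) (rho n j v)"
        using 2 by (simp add: rho_def shv_def subst_sum)
      finally show ?thesis .
    next
      case 3
      then have "\<not> v + i - 1 < p" "v + i - 1 \<noteq> p" "v + i - 1 + n - 1 = v + n - 1 + i - 1" using p i j that n by auto
      then show ?thesis using 3 by (simp add: rho_def shv_def)
    qed
  qed
  have Z: "shv p v = (subst (shv i) (shv j v) :: 'k mpoly)" if "1 \<le> v" for v
  proof -
    have "v + p - 1 = v + j - 1 + i - 1" using that p i j by auto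
    then show ?thesis by (simp add: shv_def)
  qed
  have "Qcomp (l + m - 1) n p (Qcomp l m i x y) z
      = subst (\<lambda>v. subst (rho n p) (rho m i v)) x * subst (\<lambda>v. subst (rho n p) (shv i v)) y * subst (shv p) z"
    using p i by (simp add: Qcomp_eq subst_mult subst_subst)
  also have "\<dots> = subst (rho (m + n - 1) i) x * subst (\<lambda>v. subst (shv i) (rho n j v)) y * subst (\<lambda>v. subst (shv i) (shv j v)) z"
  proof -
    have "subst (\<lambda>v. subst (rho n p) (rho m i v)) x = subst (rho (m + n - 1) i) x"
      by (rule subst_cong_Qc[OF x]) (simp add: X)
    moreover have "subst (\<lambda>v. subst (rho n p) (shv i v)) y = subst (\<lambda>v. subst (shv i) (rho n j v)) y"
      by (rule subst_cong_Qc[OF y]) (simp add: Y)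
    moreover have "subst (shv p) z = subst (\<lambda>v. subst (shv i) (shv j v)) z"
      by (rule subst_cong_Qc[OF z]) (simp add: Z)
    ultimately show ?thesis by simp
  qed
  also have "\<dots> = Qcomp l (m + n - 1) i x (Qcomp m n j y z)"
    using i j by (simp add: Qcomp_eq subst_mult subst_subst mult_ac)
  finally show ?thesis by (simp add: p_def)
qed

lemma QaxII:
  fixes x :: "'k::comm_ring_1 mpoly"
  assumes l: "1 \<le> l" and m: "1 \<le> m" and n: "1 \<le> n"
    and x: "x \<in> Qc l" and y: "y \<in> Qc m" and z: "z \<in> Qc n"
    and ik: "1 \<le> i" "i < k" "k \<le> l"
  shows "Qcomp (l + m - 1) n (k + m - 1) (Qcomp l m i x y) z = Qcomp (l + n - 1) m i (Qcomp l n k x z) y"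
proof -
  define q where "q = k + m - 1"
  have q: "1 \<le> q" "i + m - 1 < q" using ik m by (auto simp: q_def)
  have k1: "1 \<le> k" using ik by auto
  have X: "subst (rho n q) (rho m i v) = (subst (rho m i) (rho n k v) :: 'k mpoly)" if "1 \<le> v" "v \<le> l" for v
  proof -
    consider "v < i" | "v = i" | "i < v \<and> v < k" | "v = k" | "k < v" by linarith
    then show ?thesis
    proof cases
      case 1
      then have "v < q" "v < k" using q ik by auto
      then show ?thesis using 1 by (simp add: rho_def)
    next
      case 2
      have "subst (rho n q) (rho m i v) = (\<Sum>t<m. rho n q (i + t) :: 'k mpoly)"
        using 2 by (simp add: rho_def subst_sum)
      also have "\<dots> = (\<Sum>t<m. Var (i + t))"
        by (rule sum.cong) (use q in \<open>auto simp: rho_def\<close>)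
      also have "\<dots> = subst (rho m i) (rho n k v)"
        using 2 ik by (simp add: rho_def)
      finally show ?thesis .
    next
      case 3
      then have "v + m - 1 < q" "\<not> v < i" "v \<noteq> i" using q ik m by (auto simp: q_def)
      then show ?thesis using 3 by (simp add: rho_def)
    next
      case 4
      have "subst (rho n q) (rho m i v) = (\<Sum>t<n. Var (q + t) :: 'k mpoly)"
        using 4 ik by (simp add: rho_def q_def)
      also have "\<dots> = (\<Sum>t<n. rho m i (k + t))"
        by (rule sum.cong) (use ik in \<open>auto simp: rho_def q_def ac_simps\<close>)
      also have "\<dots> = subst (rho m i) (rho n k v)"
        using 4 by (simp add: rho_def subst_sum)
      finally show ?thesis .
    next
      case 5
      then have "\<not> v + m - 1 < q" "v + m - 1 \<noteq> q" "\<not> v + n - 1 < i" "v + n - 1 \<noteq> i"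
        "\<not> v < i" "v \<noteq> i" "\<not> v < k" "v \<noteq> k"
        "v + m - 1 + n - 1 = v + n - 1 + m - 1"
        using q ik m n by (auto simp: q_def)
      then show ?thesis by (simp add: rho_def)
    qed
  qed
  have Y: "subst (rho n q) (shv i v) = (shv i v :: 'k mpoly)" if "1 \<le> v" "v \<le> m" for v
  proof -
    have "v + i - 1 < q" using that q ik by auto
    then show ?thesis by (simp add: rho_def shv_def)
  qed
  have Z: "shv q v = (subst (rho m i) (shv k v) :: 'k mpoly)" if "1 \<le> v" "v \<le> n" for v
  proof -
    have "\<not> v + k - 1 < i" "v + k - 1 \<noteq> i" "v + q - 1 = v + k - 1 + m - 1"
      using that ik m by (auto simp: q_def)
    then show ?thesis by (simp add: rho_def shv_def)
  qed
  have "Qcomp (l + m - 1) n q (Qcomp l m i x y) z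
      = subst (\<lambda>v. subst (rho n q) (rho m i v)) x * subst (\<lambda>v. subst (rho n q) (shv i v)) y * subst (shv q) z"
    using q ik by (simp add: Qcomp_eq subst_mult subst_subst)
  also have "\<dots> = subst (\<lambda>v. subst (rho m i) (rho n k v)) x * subst (shv i) y * subst (\<lambda>v. subst (rho m i) (shv k v)) z"
  proof -
    have "subst (\<lambda>v. subst (rho n q) (rho m i v)) x = subst (\<lambda>v. subst (rho m i) (rho n k v)) x"
      by (rule subst_cong_Qc[OF x]) (simp add: X)
    moreover have "subst (\<lambda>v. subst (rho n q) (shv i v)) y = subst (shv i) y"
      by (rule subst_cong_Qc[OF y]) (simp add: Y)
    moreover have "subst (shv q) z = subst (\<lambda>v. subst (rho m i) (shv k v)) z"
      by (rule subst_cong_Qc[OF z]) (simp add: Z)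
    ultimately show ?thesis by simp
  qed
  also have "\<dots> = Qcomp (l + n - 1) m i (Qcomp l n k x z) y"
    using ik k1 by (simp add: Qcomp_eq subst_mult subst_subst mult_ac)
  finally show ?thesis by (simp add: q_def)
qed

lemma QaxI':
  fixes x :: "'k::comm_ring_1 mpoly"
  assumes "1 \<le> l" "1 \<le> m" "1 \<le> n" "x \<in> Qc l" "y \<in> Qc m" "z \<in> Qc n"
    "1 \<le> i" "i \<le> l" "1 \<le> j" "j \<le> m"
  shows "Qcomp (l + m - 1) n (i + j - 1) (Qcomp l m i x y) z = Qcomp l (m + n - 1) i x (Qcomp m n j y z)"
  using QaxI[OF assms] assms(7) by (simp add: add.commute)

lemma poly_smult_module: "is_module_scalar (poly_smult :: 'k::comm_ring_1 \<Rightarrow> 'k mpoly \<Rightarrow> 'k mpoly)"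
  unfolding is_module_scalar_def poly_smult_def
  by (simp add: Const_add Const_mult distrib_left distrib_right mult.assoc)

lemma Q_operad: "ns_operad (poly_smult :: 'k::comm_ring_1 \<Rightarrow> 'k mpoly \<Rightarrow> 'k mpoly) Qc 1 Qcomp"
  unfolding ns_operad_def
proof (intro conjI allI impI ballI poly_smult_module)
  show "\<And>n. 1 \<le> n \<Longrightarrow> 0 \<in> Qc n" by simp
  show "\<And>n x y. 1 \<le> n \<Longrightarrow> x \<in> Qc n \<Longrightarrow> y \<in> Qc n \<Longrightarrow> x + y \<in> Qc n" by auto
  show "\<And>n a x. 1 \<le> n \<Longrightarrow> x \<in> Qc n \<Longrightarrow> poly_smult a x \<in> Qc n" by auto
  show "(1::'k mpoly) \<in> Qc 1" by simp
qed (auto simp: Qcomp_add1 Qcomp_add2 Qcomp_sc1 Qcomp_sc2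
         intro: QaxI'[simplified] QaxII[simplified] Qcomp_Qc[simplified] Qcomp_unit1[simplified] Qcomp_unit2[simplified])


declare One_nat_def[simp del]

fun Mg :: "(nat \<Rightarrow> nat \<Rightarrow> nat \<Rightarrow> 'b \<Rightarrow> 'b \<Rightarrow> 'b) \<Rightarrow> 'b \<Rightarrow> 'b \<Rightarrow> 'b \<Rightarrow> nat list \<Rightarrow> 'b" where
  "Mg cmp e d m [] = e"
| "Mg cmp e d m [j] = op_pow cmp e d j"
| "Mg cmp e d m (j # k # ks) =
     cmp (Suc (Suc (length ks))) 1 1 (cmp 2 (Suc (length ks)) 2 m (Mg cmp e d m (k # ks))) (op_pow cmp e d j)"

locale opd =
  fixes sc :: "'k::comm_ring_1 \<Rightarrow> 'b::ab_group_add \<Rightarrow> 'b" and C :: "nat \<Rightarrow> 'b set"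
    and e :: 'b and cmp :: "nat \<Rightarrow> nat \<Rightarrow> nat \<Rightarrow> 'b \<Rightarrow> 'b \<Rightarrow> 'b"
  assumes opd: "ns_operad sc C e cmp"
begin

lemma sc_add: "sc a (x + y) = sc a x + sc a y"
  using opd by (simp add: ns_operad_def is_module_scalar_def)
lemma sc_add2: "sc (a + b) x = sc a x + sc b x"
  using opd by (simp add: ns_operad_def is_module_scalar_def)
lemma sc_mult: "sc (a * b) x = sc a (sc b x)"
  using opd by (simp add: ns_operad_def is_module_scalar_def)
lemma sc_one[simp]: "sc 1 x = x"
  using opd by (simp add: ns_operad_def is_module_scalar_def)
lemma sc_zero2[simp]: "sc a 0 = 0"
  using sc_add[of a 0 0] by simp
lemma sc_zero1[simp]: "sc 0 x = 0"
  using sc_add2[of 0 0 x] by simp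
lemma sc_sum: "sc a (\<Sum>x\<in>A. f x) = (\<Sum>x\<in>A. sc a (f x))"
  by (induction A rule: infinite_finite_induct) (auto simp: sc_add)

lemma zero_C: "1 \<le> n \<Longrightarrow> 0 \<in> C n"
  using opd by (simp add: ns_operad_def)
lemma add_C: "1 \<le> n \<Longrightarrow> x \<in> C n \<Longrightarrow> y \<in> C n \<Longrightarrow> x + y \<in> C n"
  using opd by (simp add: ns_operad_def)
lemma sc_C: "1 \<le> n \<Longrightarrow> x \<in> C n \<Longrightarrow> sc a x \<in> C n"
  using opd by (simp add: ns_operad_def)
lemma sum_C: "1 \<le> n \<Longrightarrow> (\<And>x. x \<in> A \<Longrightarrow> f x \<in> C n) \<Longrightarrow> (\<Sum>x\<in>A. f x) \<in> C n"
  by (induction A rule: infinite_finite_induct) (auto simp: zero_C add_C)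
lemma e_C: "e \<in> C 1"
  using opd by (simp add: ns_operad_def)

lemmas O = opd[unfolded ns_operad_def]
lemmas O3 = conjunct1[OF conjunct2[OF conjunct2[OF O]]]
lemmas O5 = conjunct1[OF conjunct2[OF conjunct2[OF conjunct2[OF conjunct2[OF O]]]]]
lemmas O6 = conjunct1[OF conjunct2[OF conjunct2[OF conjunct2[OF conjunct2[OF conjunct2[OF O]]]]]]
lemmas O7 = conjunct1[OF conjunct2[OF conjunct2[OF conjunct2[OF conjunct2[OF conjunct2[OF conjunct2[OF O]]]]]]]
lemmas O8 = conjunct2[OF conjunct2[OF conjunct2[OF conjunct2[OF conjunct2[OF conjunct2[OF conjunct2[OF O]]]]]]]

lemmas P1 = O3[rule_format, THEN conjunct1, rule_format]
lemmas P2 = O3[rule_format, THEN conjunct2, THEN conjunct1, rule_format]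
lemmas P3 = O3[rule_format, THEN conjunct2, THEN conjunct2, THEN conjunct1, rule_format]
lemmas P4 = O3[rule_format, THEN conjunct2, THEN conjunct2, THEN conjunct2, THEN conjunct1, rule_format]
lemmas P5 = O3[rule_format, THEN conjunct2, THEN conjunct2, THEN conjunct2, THEN conjunct2, rule_format]
lemmas P7 = O7[rule_format]
lemmas P8 = O8[rule_format]
lemmas P6 = O6[rule_format]
lemmas P5u = O5[rule_format]

lemma cmp_C: "1 \<le> m \<Longrightarrow> 1 \<le> n \<Longrightarrow> 1 \<le> i \<Longrightarrow> i \<le> m \<Longrightarrow> x \<in> C m \<Longrightarrow> y \<in> C n \<Longrightarrow>
  k = m + n - 1 \<Longrightarrow> cmp m n i x y \<in> C k"
  using P1[of m n i x y] by simp

lemma cmp_add1: "1 \<le> m \<Longrightarrow> 1 \<le> n \<Longrightarrow> 1 \<le> i \<Longrightarrow> i \<le> m \<Longrightarrow> x \<in> C m \<Longrightarrow> x' \<in> C m \<Longrightarrow> y \<in> C n \<Longrightarrow>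
  cmp m n i (x + x') y = cmp m n i x y + cmp m n i x' y"
  using P2[of m n i x x' y] by simp
lemma cmp_add2: "1 \<le> m \<Longrightarrow> 1 \<le> n \<Longrightarrow> 1 \<le> i \<Longrightarrow> i \<le> m \<Longrightarrow> x \<in> C m \<Longrightarrow> y \<in> C n \<Longrightarrow> y' \<in> C n \<Longrightarrow>
  cmp m n i x (y + y') = cmp m n i x y + cmp m n i x y'"
  using P3[of m n i x y y'] by simp
lemma cmp_sc1: "1 \<le> m \<Longrightarrow> 1 \<le> n \<Longrightarrow> 1 \<le> i \<Longrightarrow> i \<le> m \<Longrightarrow> x \<in> C m \<Longrightarrow> y \<in> C n \<Longrightarrow>
  cmp m n i (sc a x) y = sc a (cmp m n i x y)"
  by (rule P4) auto
lemma cmp_sc2: "1 \<le> m \<Longrightarrow> 1 \<le> n \<Longrightarrow> 1 \<le> i \<Longrightarrow> i \<le> m \<Longrightarrow> x \<in> C m \<Longrightarrow> y \<in> C n \<Longrightarrow>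
  cmp m n i x (sc a y) = sc a (cmp m n i x y)"
  by (rule P5) auto
lemma unitL: "1 \<le> n \<Longrightarrow> y \<in> C n \<Longrightarrow> cmp 1 n 1 e y = y"
  using P5u[of n y] by simp
lemma unitR: "1 \<le> m \<Longrightarrow> x \<in> C m \<Longrightarrow> 1 \<le> i \<Longrightarrow> i \<le> m \<Longrightarrow> cmp m 1 i x e = x"
  using P6[of m x i] by simp

lemma axI: "1 \<le> l \<Longrightarrow> 1 \<le> m \<Longrightarrow> 1 \<le> n \<Longrightarrow> x \<in> C l \<Longrightarrow> y \<in> C m \<Longrightarrow> z \<in> C n \<Longrightarrow>
  1 \<le> i \<Longrightarrow> i \<le> l \<Longrightarrow> 1 \<le> j \<Longrightarrow> j \<le> m \<Longrightarrow>
  L = l + m - 1 \<Longrightarrow> p = i - 1 + j \<Longrightarrow> M = m + n - 1 \<Longrightarrow>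
  cmp L n p (cmp l m i x y) z = cmp l M i x (cmp m n j y z)"
  using P7[of l m n x y z i j] by simp
lemma axII: "1 \<le> l \<Longrightarrow> 1 \<le> m \<Longrightarrow> 1 \<le> n \<Longrightarrow> x \<in> C l \<Longrightarrow> y \<in> C m \<Longrightarrow> z \<in> C n \<Longrightarrow>
  1 \<le> i \<Longrightarrow> i < k \<Longrightarrow> k \<le> l \<Longrightarrow>
  L = l + m - 1 \<Longrightarrow> p = k + m - 1 \<Longrightarrow> L' = l + n - 1 \<Longrightarrow>
  cmp L n p (cmp l m i x y) z = cmp L' m i (cmp l n k x z) y"
  using P8[of l m n x y z i k] by simp

lemma cmp_zero2: "1 \<le> m \<Longrightarrow> 1 \<le> n \<Longrightarrow> 1 \<le> i \<Longrightarrow> i \<le> m \<Longrightarrow> x \<in> C m \<Longrightarrow> cmp m n i x 0 = 0"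
  using cmp_add2[of m n i x 0 0] zero_C[of n] by simp
lemma cmp_zero1: "1 \<le> m \<Longrightarrow> 1 \<le> n \<Longrightarrow> 1 \<le> i \<Longrightarrow> i \<le> m \<Longrightarrow> y \<in> C n \<Longrightarrow> cmp m n i 0 y = 0"
  using cmp_add1[of m n i 0 0 y] zero_C[of m] by simp

lemma cmp_sum2: "1 \<le> m \<Longrightarrow> 1 \<le> n \<Longrightarrow> 1 \<le> i \<Longrightarrow> i \<le> m \<Longrightarrow> x \<in> C m \<Longrightarrow> (\<And>a. a \<in> A \<Longrightarrow> f a \<in> C n) \<Longrightarrow>
  cmp m n i x (\<Sum>a\<in>A. f a) = (\<Sum>a\<in>A. cmp m n i x (f a))"
proof (induction A rule: infinite_finite_induct)
  case (insert a A)
  then show ?case by (simp add: cmp_add2 sum_C)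
qed (auto simp: cmp_zero2)

lemma cmp_sum1: "1 \<le> m \<Longrightarrow> 1 \<le> n \<Longrightarrow> 1 \<le> i \<Longrightarrow> i \<le> m \<Longrightarrow> y \<in> C n \<Longrightarrow> (\<And>a. a \<in> A \<Longrightarrow> f a \<in> C m) \<Longrightarrow>
  cmp m n i (\<Sum>a\<in>A. f a) y = (\<Sum>a\<in>A. cmp m n i (f a) y)"
proof (induction A rule: infinite_finite_induct)
  case (insert a A)
  then show ?case by (simp add: cmp_add1 sum_C)
qed (auto simp: cmp_zero1)

end

locale asd = opd +
  fixes d m
  assumes d_C: "d \<in> C 1" and m_C: "m \<in> C 2" and rel: "asder_relations cmp d m"
begin

lemma assoc: "cmp 2 2 1 m m = cmp 2 2 2 m m"
  using rel by (simp add: asder_relations_def)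
lemma leib: "cmp 1 2 1 d m = cmp 2 1 1 m d + cmp 2 1 2 m d"
  using rel by (simp add: asder_relations_def)

abbreviation D where "D j \<equiv> op_pow cmp e d j"
abbreviation M where "M js \<equiv> Mg cmp e d m js"

lemma D_C: "D j \<in> C 1"
  by (induction j) (auto simp: e_C intro!: cmp_C d_C)

lemma D_C': "D j \<in> C (Suc 0)"
  using D_C by (simp add: One_nat_def)

lemma D_add: "cmp 1 1 1 (D j) (D k) = D (j + k)"
proof (induction j)
  case 0 then show ?case by (simp add: unitL D_C)
next
  case (Suc j)
  have "cmp 1 1 1 (D (Suc j)) (D k) = cmp 1 1 1 d (cmp 1 1 1 (D j) (D k))"
    by (simp, rule axI) (auto simp: d_C D_C)
  then show ?case using Suc by simp
qed

lemma D1: "D 1 = d"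
proof -
  have "D (Suc 0) = d" by (simp add: unitR d_C)
  then show ?thesis by (simp add: One_nat_def)
qed

lemma M_C: "js \<noteq> [] \<Longrightarrow> M js \<in> C (length js)"
proof (induction js)
  case (Cons j ks)
  show ?case
  proof (cases ks)
    case Nil then show ?thesis by (simp add: D_C')
  next
    case (Cons k ks')
    with Cons.IH have IH: "M (k # ks') \<in> C (Suc (length ks'))" by simp
    have "cmp 2 (Suc (length ks')) 2 m (M (k # ks')) \<in> C (Suc (Suc (length ks')))"
      by (rule cmp_C[OF _ _ _ _ m_C IH]) auto
    then show ?thesis using Cons
      by (simp, intro cmp_C[OF _ _ _ _ _ D_C]) auto
  qed
qed simp

lemmas [simp] = Suc_eq_plus1

lemma M_Cons2: "ks \<noteq> [] \<Longrightarrow> M (j # ks) = cmp (length ks + 1) 1 1 (cmp 2 (length ks) 2 m (M ks)) (D j)"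
  by (cases ks) auto

lemma len1: "ks \<noteq> [] \<Longrightarrow> 1 \<le> length ks"
  by (cases ks) auto

lemma M_C2: "ks \<noteq> [] \<Longrightarrow> N = length ks + 1 \<Longrightarrow> cmp 2 (length ks) 2 m (M ks) \<in> C N"
  by (rule cmp_C[OF _ _ _ _ m_C M_C]) (auto simp: len1)

lemma M_D: "N = length pre + length post + 1 \<Longrightarrow> i = length pre + 1 \<Longrightarrow>
  cmp N 1 i (M (pre @ j # post)) (D k) = M (pre @ (j + k) # post)"
proof (induction pre arbitrary: N i)
  case Nil
  show ?case
  proof (cases post)
    case Nil
    then show ?thesis using \<open>N = _\<close> \<open>i = _\<close> by (simp add: D_add)
  next
    case (Cons q post')
    let ?X = "cmp 2 (length post) 2 m (M post)"
    have X: "?X \<in> C (length post + 1)" by (rule M_C2) (auto simp: Cons)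
    have "cmp N 1 i (M ([] @ j # post)) (D k) = cmp (length post + 1) 1 1 (cmp (length post + 1) 1 1 ?X (D j)) (D k)"
      using Nil.prems Cons by (simp add: M_Cons2)
    also have "\<dots> = cmp (length post + 1) 1 1 ?X (cmp 1 1 1 (D j) (D k))"
      by (rule axI[OF _ _ _ X D_C D_C]) auto
    also have "\<dots> = M ([] @ (j + k) # post)"
      using Cons by (simp add: M_Cons2 D_add)
    finally show ?thesis .
  qed
next
  case (Cons p pre')
  let ?rest = "pre' @ j # post"
  let ?rest2 = "pre' @ (j + k) # post"
  let ?Y = "cmp 2 (length ?rest) 2 m (M ?rest)"
  have Y: "?Y \<in> C N" by (rule M_C2) (auto simp: Cons.prems)
  have R: "M ?rest \<in> C (length ?rest)" by (rule M_C) simp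
  have "cmp N 1 i (M ((p # pre') @ j # post)) (D k) = cmp N 1 i (cmp N 1 1 ?Y (D p)) (D k)"
    using Cons.prems by (simp add: M_Cons2 ac_simps)
  also have "\<dots> = cmp N 1 1 (cmp N 1 i ?Y (D k)) (D p)"
    by (rule axII[OF _ _ _ Y D_C D_C]) (auto simp: Cons.prems)
  also have "cmp N 1 i ?Y (D k) = cmp 2 (length ?rest) 2 m (cmp (length ?rest) 1 (length pre' + 1) (M ?rest) (D k))"
    by (rule axI[OF _ _ _ m_C R D_C]) (auto simp: Cons.prems)
  also have "cmp (length ?rest) 1 (length pre' + 1) (M ?rest) (D k) = M ?rest2"
    by (rule Cons.IH) auto
  also have "cmp N 1 1 (cmp 2 (length ?rest) 2 m (M ?rest2)) (D p) = M ((p # pre') @ (j + k) # post)"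
    using Cons.prems by (simp add: M_Cons2 ac_simps)
  finally show ?case .
qed

lemma M_m: "N = length pre + length post + 1 \<Longrightarrow> i = length pre + 1 \<Longrightarrow>
  cmp N 2 i (M (pre @ 0 # post)) m = M (pre @ 0 # 0 # post)"
proof (induction pre arbitrary: N i)
  case Nil
  show ?case
  proof (cases post)
    case Nil
    have "cmp 2 1 2 m e = m" by (rule unitR[OF _ m_C]) auto
    moreover have "cmp 2 1 1 m e = m" by (rule unitR[OF _ m_C]) auto
    ultimately show ?thesis using Nil \<open>N = _\<close> \<open>i = _\<close> by (simp add: unitL m_C)
  next
    case (Cons q post')
    let ?n = "length post"
    let ?Y = "cmp 2 ?n 2 m (M post)"
    have Y: "?Y \<in> C (?n + 1)" by (rule M_C2) (auto simp: Cons)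
    have R: "M post \<in> C ?n" by (rule M_C) (simp add: Cons)
    have n1: "1 \<le> ?n" by (simp add: Cons)
    have "cmp N 2 i (M ([] @ 0 # post)) m = cmp (?n + 1) 2 1 ?Y m"
      using Nil.prems Cons Y by (simp add: M_Cons2 unitR)
    also have "\<dots> = cmp 3 ?n 3 (cmp 2 2 1 m m) (M post)"
      by (rule axII[OF _ _ _ m_C m_C R, symmetric]) (auto simp: n1)
    also have "\<dots> = cmp 3 ?n 3 (cmp 2 2 2 m m) (M post)"
      by (simp add: assoc)
    also have "\<dots> = cmp 2 (?n + 1) 2 m ?Y"
      by (rule axI[OF _ _ _ m_C m_C R]) (auto simp: n1)
    also have "\<dots> = M ([] @ 0 # 0 # post)"
    proof -
      have "cmp (?n + 1) 1 1 ?Y (D 0) = ?Y" using Y by (simp add: unitR)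
      moreover have Y2: "cmp 2 (?n + 1) 2 m ?Y \<in> C (?n + 2)"
        by (rule cmp_C[OF _ _ _ _ m_C Y]) auto
      moreover have "cmp (?n + 2) 1 1 (cmp 2 (?n + 1) 2 m ?Y) (D 0) = cmp 2 (?n + 1) 2 m ?Y"
        using Y2 by (simp add: unitR)
      ultimately show ?thesis using Cons by (simp add: M_Cons2 ac_simps)
    qed
    finally show ?thesis .
  qed
next
  case (Cons p pre')
  let ?rest = "pre' @ 0 # post"
  let ?rest2 = "pre' @ 0 # 0 # post"
  let ?Y = "cmp 2 (length ?rest) 2 m (M ?rest)"
  have Y: "?Y \<in> C N" by (rule M_C2) (auto simp: Cons.prems)
  have R: "M ?rest \<in> C (length ?rest)" by (rule M_C) simp
  have "cmp N 2 i (M ((p # pre') @ 0 # post)) m = cmp N 2 i (cmp N 1 1 ?Y (D p)) m"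
    using Cons.prems by (simp add: M_Cons2 ac_simps)
  also have "\<dots> = cmp (N + 1) 1 1 (cmp N 2 i ?Y m) (D p)"
    by (rule axII[OF _ _ _ Y D_C m_C]) (auto simp: Cons.prems)
  also have "cmp N 2 i ?Y m = cmp 2 (length ?rest + 1) 2 m (cmp (length ?rest) 2 (length pre' + 1) (M ?rest) m)"
    by (rule axI[OF _ _ _ m_C R m_C]) (auto simp: Cons.prems)
  also have "cmp (length ?rest) 2 (length pre' + 1) (M ?rest) m = M ?rest2"
    by (rule Cons.IH) auto
  also have "cmp (N + 1) 1 1 (cmp 2 (length ?rest + 1) 2 m (M ?rest2)) (D p) = M ((p # pre') @ 0 # 0 # post)"
    using Cons.prems by (simp add: M_Cons2 ac_simps)
  finally show ?case .
qed

lemma leib_shift: "1 \<le> n \<Longrightarrow> X \<in> C n \<Longrightarrow> 1 \<le> i \<Longrightarrow> i \<le> n \<Longrightarrow>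
  cmp n 2 i (cmp n 1 i X d) m = cmp (n + 1) 1 i (cmp n 2 i X m) d + cmp (n + 1) 1 (i + 1) (cmp n 2 i X m) d"
proof -
  assume a: "1 \<le> n" "X \<in> C n" "1 \<le> i" "i \<le> n"
  have c1: "cmp 2 1 1 m d \<in> C 2" by (rule cmp_C[OF _ _ _ _ m_C d_C]) auto
  have c2: "cmp 2 1 2 m d \<in> C 2" by (rule cmp_C[OF _ _ _ _ m_C d_C]) auto
  have "cmp n 2 i (cmp n 1 i X d) m = cmp n 2 i X (cmp 1 2 1 d m)"
    by (rule axI[OF _ _ _ a(2) d_C m_C]) (use a in auto)
  also have "\<dots> = cmp n 2 i X (cmp 2 1 1 m d) + cmp n 2 i X (cmp 2 1 2 m d)"
    by (simp add: leib, rule cmp_add2[OF _ _ _ _ a(2) c1 c2]) (use a in auto)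
  also have "cmp n 2 i X (cmp 2 1 1 m d) = cmp (n + 1) 1 i (cmp n 2 i X m) d"
    by (rule axI[OF _ _ _ a(2) m_C d_C, symmetric]) (use a in auto)
  also have "cmp n 2 i X (cmp 2 1 2 m d) = cmp (n + 1) 1 (i + 1) (cmp n 2 i X m) d"
    by (rule axI[OF _ _ _ a(2) m_C d_C, symmetric]) (use a in auto)
  finally show ?thesis .
qed

lemma M0: "M [0] = e" by simp
lemma M1: "M [1] = d" using D1 by simp
lemma M00: "M [0, 0] = m"
proof -
  have "cmp 2 1 2 m e = m" by (rule unitR[OF _ m_C]) auto
  moreover have "cmp 2 1 1 m e = m" by (rule unitR[OF _ m_C]) auto
  ultimately show ?thesis by simp
qed

end


lemma lookup_Const_mult: "Poly_Mapping.lookup (Const c * p) a = c * Poly_Mapping.lookup p a"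
proof -
  have "Const c * p = Poly_Mapping.map ((*) c) p" by (simp add: Const_def mult_map_scale_conv_mult)
  then show ?thesis by (simp add: map.rep_eq when_def)
qed

lemma keys_Const_mult: "Poly_Mapping.keys (Const c * p) \<subseteq> Poly_Mapping.keys p"
  by (auto simp: in_keys_iff lookup_Const_mult)

definition mexp :: "nat list \<Rightarrow> (nat \<Rightarrow>\<^sub>0 nat)" where
  "mexp js = (\<Sum>r<length js. Poly_Mapping.single (r + 1) (js ! r))"

definition js_of :: "nat \<Rightarrow> (nat \<Rightarrow>\<^sub>0 nat) \<Rightarrow> nat list" where
  "js_of n a = map (Poly_Mapping.lookup a) [1..<n + 1]"

lemma length_js_of[simp]: "length (js_of n a) = n" by (simp add: js_of_def)
lemma nth_js_of: "r < n \<Longrightarrow> js_of n a ! r = Poly_Mapping.lookup a (r + 1)"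
  by (simp add: js_of_def add.commute)

lemma lookup_mexp: "Poly_Mapping.lookup (mexp js) v = (if 1 \<le> v \<and> v \<le> length js then js ! (v - 1) else 0)"
proof -
  have "Poly_Mapping.lookup (mexp js) v = (\<Sum>r<length js. if r = v - 1 \<and> 1 \<le> v then js ! r else 0)"
    unfolding mexp_def lookup_sum
    by (rule sum.cong) (auto simp: lookup_single when_def)
  also have "\<dots> = (if 1 \<le> v \<and> v \<le> length js then js ! (v - 1) else 0)"
    by (cases "1 \<le> v") (auto simp: sum.delta')
  finally show ?thesis .
qed

lemma js_of_mexp: "length js = n \<Longrightarrow> js_of n (mexp js) = js"
  by (rule nth_equalityI) (auto simp: nth_js_of lookup_mexp)

lemma mexp_js_of: "Poly_Mapping.keys a \<subseteq> {1..n} \<Longrightarrow> mexp (js_of n a) = a"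
  by (rule poly_mapping_eqI) (auto simp: lookup_mexp nth_js_of in_keys_iff)

definition monoL :: "nat list \<Rightarrow> 'k::comm_ring_1 mpoly" where
  "monoL js = (\<Prod>r<length js. Var (r + 1) ^ (js ! r))"

lemma monoL_single: "monoL js = Poly_Mapping.single (mexp js) 1"
  by (simp add: monoL_def mexp_def Var_power prod_single1)

lemma Q_asd: "asd (poly_smult :: 'k::comm_ring_1 \<Rightarrow> 'k mpoly \<Rightarrow> 'k mpoly) Qc 1 Qcomp (Var 1) 1"
proof -
  interpret opd "poly_smult :: 'k::comm_ring_1 \<Rightarrow> 'k mpoly \<Rightarrow> 'k mpoly" Qc 1 Qcomp
    by unfold_locales (rule Q_operad)
  show ?thesis
  proof unfold_locales
    show "Var 1 \<in> Qc 1" by (rule Qc_Var) auto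
    show "(1 :: 'k mpoly) \<in> Qc 2" by simp
    have "Qcomp 1 2 1 (Var 1) 1 = (Var 1 + Var 2 :: 'k mpoly)"
      by (simp add: Qcomp_eq rho_def numeral_2_eq_2)
    moreover have "Qcomp 2 1 1 1 (Var 1) = (Var 1 :: 'k mpoly)"
      by (simp add: Qcomp_eq shv_def One_nat_def)
    moreover have "Qcomp 2 1 2 1 (Var 1) = (Var 2 :: 'k mpoly)"
      by (simp add: Qcomp_eq shv_def)
    moreover have "Qcomp 2 2 1 1 1 = (Qcomp 2 2 2 1 1 :: 'k mpoly)"
      by (simp add: Qcomp_eq)
    ultimately show "asder_relations Qcomp (Var 1) (1 :: 'k mpoly)"
      by (simp add: asder_relations_def)
  qed
qed

interpretation Q: asd "poly_smult :: 'k::comm_ring_1 \<Rightarrow> 'k mpoly \<Rightarrow> 'k mpoly" Qc 1 Qcomp "Var 1" 1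
  by (rule Q_asd)

declare Suc_eq_plus1[simp del]

lemma rho11: "rho 1 1 v = (Var v :: 'k::comm_ring_1 mpoly)"
  by (cases "v = 0"; cases "v = 1") (auto simp: rho_def One_nat_def)

lemma Qcomp_11: "Qcomp n 1 1 X Y = X * (Y :: 'k::comm_ring_1 mpoly)"
proof -
  have "subst (rho 1 1) X = X" by (rule subst_Var_id') (rule rho11)
  moreover have "subst (shv 1) Y = Y" by (rule subst_Var_id') (simp add: shv_def)
  ultimately show ?thesis by (simp add: Qcomp_eq)
qed

lemma QD: "Q.D j = (Var 1 ^ j :: 'k::comm_ring_1 mpoly)"
  by (induction j) (auto simp: Qcomp_11)

lemma Qcomp_2_2: "Qcomp 2 n 2 1 R = subst (shv 2) (R :: 'k::comm_ring_1 mpoly)"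
  by (simp add: Qcomp_eq)

lemma MQ_monoL: "js \<noteq> [] \<Longrightarrow> Q.M js = (monoL js :: 'k::comm_ring_1 mpoly)"
proof (induction js)
  case (Cons j ks)
  show ?case
  proof (cases ks)
    case Nil then show ?thesis by (simp add: QD monoL_def)
  next
    case (Cons k ks')
    then have IH: "Q.M ks = (monoL ks :: 'k mpoly)" using Cons.IH by simp
    have "Q.M (j # ks) = subst (shv 2) (monoL ks) * (Var 1 ^ j :: 'k mpoly)"
      using Cons by (simp add: Qcomp_11 Qcomp_2_2 QD IH[unfolded Cons])
    also have "\<dots> = (\<Prod>r<length ks. Var (Suc r + 1) ^ (ks ! r)) * Var 1 ^ j"
      unfolding monoL_def subst_prod subst_power shv_def subst_Var
      by (intro arg_cong2[where f="(*)"] prod.cong refl arg_cong2[where f="(^)"] arg_cong[where f=Var]) simp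
    also have "\<dots> = monoL (j # ks)"
      by (simp only: monoL_def prod.lessThan_Suc_shift mult.commute length_Cons nth_Cons_Suc nth_Cons_0) simp
    finally show ?thesis .
  qed
qed simp

lemma MQ_single: "js \<noteq> [] \<Longrightarrow> Q.M js = (Poly_Mapping.single (mexp js) 1 :: 'k::comm_ring_1 mpoly)"
  by (simp add: MQ_monoL monoL_single)

lemma Qc_keys: "p \<in> Qc n \<Longrightarrow> a \<in> Poly_Mapping.keys p \<Longrightarrow> Poly_Mapping.keys a \<subseteq> {1..n}"
  by (auto simp: Qc_def)

lemma Q_decomp: "1 \<le> n \<Longrightarrow> p \<in> Qc n \<Longrightarrow>
  p = (\<Sum>a\<in>Poly_Mapping.keys p. poly_smult (Poly_Mapping.lookup p a) (Q.M (js_of n a)))"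
proof -
  assume n: "1 \<le> n" and p: "p \<in> Qc n"
  have "js_of n a \<noteq> []" for a using n by (cases n) (auto simp: js_of_def)
  then have "(\<Sum>a\<in>Poly_Mapping.keys p. poly_smult (Poly_Mapping.lookup p a) (Q.M (js_of n a)))
     = (\<Sum>a\<in>Poly_Mapping.keys p. Poly_Mapping.single a (Poly_Mapping.lookup p a))"
    by (intro sum.cong refl) (simp add: MQ_single mexp_js_of[OF Qc_keys[OF p]] poly_smult_def Const_single)
  then show ?thesis by (metis poly_sum_single)
qed

lemma MQ_Qc: "js \<noteq> [] \<Longrightarrow> Q.M js \<in> Qc (length js)"
  by (rule Q.M_C)

lemma hom_add: "ns_operad_hom sc C e cmp sc' C' e' cmp' f \<Longrightarrow> 1 \<le> n \<Longrightarrow> x \<in> C n \<Longrightarrow> y \<in> C n \<Longrightarrow>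
  f n (x + y) = f n x + f n y"
  unfolding ns_operad_hom_def by (drule conjunct2, drule conjunct1) blast
lemma hom_sc: "ns_operad_hom sc C e cmp sc' C' e' cmp' f \<Longrightarrow> 1 \<le> n \<Longrightarrow> x \<in> C n \<Longrightarrow>
  f n (sc a x) = sc' a (f n x)"
  unfolding ns_operad_hom_def by (drule conjunct2, drule conjunct2, drule conjunct1) blast
lemma hom_unit: "ns_operad_hom sc C e cmp sc' C' e' cmp' f \<Longrightarrow> f 1 e = e'"
  unfolding ns_operad_hom_def by (drule conjunct2, drule conjunct2, drule conjunct2, drule conjunct1) blast
lemma hom_comp: "ns_operad_hom sc C e cmp sc' C' e' cmp' f \<Longrightarrow> 1 \<le> a \<Longrightarrow> 1 \<le> b \<Longrightarrow> 1 \<le> i \<Longrightarrow> i \<le> a \<Longrightarrow>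
  x \<in> C a \<Longrightarrow> y \<in> C b \<Longrightarrow> f (a + b - 1) (cmp a b i x y) = cmp' a b i (f a x) (f b y)"
  unfolding ns_operad_hom_def by (drule conjunct2, drule conjunct2, drule conjunct2, drule conjunct2) blast

lemma js_of_ne: "1 \<le> n \<Longrightarrow> js_of n a \<noteq> []"
  by (cases n) (auto simp: js_of_def)

context asd
begin

definition T where
  "T n p = (\<Sum>a\<in>Poly_Mapping.keys p. sc (Poly_Mapping.lookup p a) (M (js_of n a)))"

lemma T_superset: "finite S \<Longrightarrow> Poly_Mapping.keys p \<subseteq> S \<Longrightarrow>
  T n p = (\<Sum>a\<in>S. sc (Poly_Mapping.lookup p a) (M (js_of n a)))"
  unfolding T_def by (rule sum.mono_neutral_left) (auto simp: in_keys_iff)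

lemma T_add: "T n (p + q) = T n p + T n q"
proof -
  let ?S = "Poly_Mapping.keys p \<union> Poly_Mapping.keys q"
  have "T n (p + q) = (\<Sum>a\<in>?S. sc (Poly_Mapping.lookup (p + q) a) (M (js_of n a)))"
    by (rule T_superset) (auto simp: keys_add)
  also have "\<dots> = (\<Sum>a\<in>?S. sc (Poly_Mapping.lookup p a) (M (js_of n a))) + (\<Sum>a\<in>?S. sc (Poly_Mapping.lookup q a) (M (js_of n a)))"
    by (simp add: lookup_add sc_add2 sum.distrib)
  also have "\<dots> = T n p + T n q"
    by (simp add: T_superset[symmetric])
  finally show ?thesis .
qed

lemma T_0[simp]: "T n 0 = 0" by (simp add: T_def)

lemma T_sum: "T n (\<Sum>x\<in>A. f x) = (\<Sum>x\<in>A. T n (f x))"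
  by (induction A rule: infinite_finite_induct) (auto simp: T_add)

lemma T_smult: "T n (poly_smult c p) = sc c (T n p)"
proof -
  have "T n (poly_smult c p) = (\<Sum>a\<in>Poly_Mapping.keys p. sc (c * Poly_Mapping.lookup p a) (M (js_of n a)))"
    unfolding poly_smult_def by (subst T_superset[of "Poly_Mapping.keys p"]) (auto simp: keys_Const_mult lookup_Const_mult)
  also have "\<dots> = sc c (T n p)"
    by (simp add: T_def sc_sum sc_mult)
  finally show ?thesis .
qed

lemma M_js_C: "1 \<le> n \<Longrightarrow> M (js_of n a) \<in> C n"
  using M_C[OF js_of_ne, of n a] by simp

lemma T_C: "1 \<le> n \<Longrightarrow> T n p \<in> C n"
  unfolding T_def by (intro sum_C sc_C) (auto intro!: M_C[of "js_of n _", simplified] simp: js_of_ne)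

lemma T_MQ: "js \<noteq> [] \<Longrightarrow> length js = n \<Longrightarrow> T n (Q.M js) = M js"
proof -
  assume js: "js \<noteq> []" "length js = n"
  have "T n (Q.M js) = (\<Sum>a\<in>{mexp js}. sc (Poly_Mapping.lookup (Q.M js) a) (M (js_of n a)))"
    by (rule T_superset) (auto simp: MQ_single js)
  also have "\<dots> = M js" by (simp add: MQ_single js js_of_mexp)
  finally show ?thesis .
qed

lemma ext_P:
  assumes N: "1 \<le> N" and Mr: "1 \<le> Mr" and i: "1 \<le> i" "i \<le> N" and Qv: "Qv \<in> Qc Mr"
    and hyp: "\<And>js. length js = N \<Longrightarrow> T (N + Mr - 1) (Qcomp N Mr i (Q.M js) Qv) = cmp N Mr i (M js) (T Mr Qv)"
    and P: "P \<in> Qc N"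
  shows "T (N + Mr - 1) (Qcomp N Mr i P Qv) = cmp N Mr i (T N P) (T Mr Qv)"
proof -
  let ?c = "\<lambda>a. Poly_Mapping.lookup P a"
  let ?m = "\<lambda>a. Q.M (js_of N a)"
  have mQ: "?m a \<in> Qc N" for a using Q.M_C[OF js_of_ne[OF N], of a] by simp
  have "Qcomp N Mr i P Qv = Qcomp N Mr i (\<Sum>a\<in>Poly_Mapping.keys P. poly_smult (?c a) (?m a)) Qv"
    using Q_decomp[OF N P] by simp
  also have "\<dots> = (\<Sum>a\<in>Poly_Mapping.keys P. poly_smult (?c a) (Qcomp N Mr i (?m a) Qv))"
    by (subst Q.cmp_sum1) (auto simp: N Mr i Qv mQ Q.sc_C Q.cmp_sc1)
  finally have "T (N + Mr - 1) (Qcomp N Mr i P Qv) = (\<Sum>a\<in>Poly_Mapping.keys P. sc (?c a) (cmp N Mr i (M (js_of N a)) (T Mr Qv)))"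
    by (simp add: T_sum T_smult hyp)
  also have "\<dots> = cmp N Mr i (T N P) (T Mr Qv)"
    unfolding T_def[of N P]
    by (subst cmp_sum1) (auto simp: N Mr i T_C M_js_C sc_C cmp_sc1)
  finally show ?thesis .
qed

lemma ext_Q:
  assumes N: "1 \<le> N" and Mr: "1 \<le> Mr" and i: "1 \<le> i" "i \<le> N" and P: "P \<in> Qc N"
    and hyp: "\<And>ks. length ks = Mr \<Longrightarrow> T (N + Mr - 1) (Qcomp N Mr i P (Q.M ks)) = cmp N Mr i (T N P) (M ks)"
    and Qv: "Qv \<in> Qc Mr"
  shows "T (N + Mr - 1) (Qcomp N Mr i P Qv) = cmp N Mr i (T N P) (T Mr Qv)"
proof -
  let ?c = "\<lambda>a. Poly_Mapping.lookup Qv a"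
  let ?m = "\<lambda>a. Q.M (js_of Mr a)"
  have mQ: "?m a \<in> Qc Mr" for a using Q.M_C[OF js_of_ne[OF Mr], of a] by simp
  have "Qcomp N Mr i P Qv = Qcomp N Mr i P (\<Sum>a\<in>Poly_Mapping.keys Qv. poly_smult (?c a) (?m a))"
    using Q_decomp[OF Mr Qv] by simp
  also have "\<dots> = (\<Sum>a\<in>Poly_Mapping.keys Qv. poly_smult (?c a) (Qcomp N Mr i P (?m a)))"
    by (subst Q.cmp_sum2) (auto simp: N Mr i P mQ Q.sc_C Q.cmp_sc2)
  finally have "T (N + Mr - 1) (Qcomp N Mr i P Qv) = (\<Sum>a\<in>Poly_Mapping.keys Qv. sc (?c a) (cmp N Mr i (T N P) (M (js_of Mr a))))"
    by (simp add: T_sum T_smult hyp)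
  also have "\<dots> = cmp N Mr i (T N P) (T Mr Qv)"
    unfolding T_def[of Mr]
    by (subst cmp_sum2) (auto simp: N Mr i T_C M_js_C sc_C cmp_sc2)
  finally show ?thesis .
qed


lemma T_D: "T 1 (Q.D k) = D k"
  using T_MQ[of "[k]" 1] by simp

lemma split_at: "1 \<le> i \<Longrightarrow> i \<le> length js \<Longrightarrow>
  js = take (i - 1) js @ js ! (i - 1) # drop i js \<and> length (take (i - 1) js) + 1 = i \<and>
  length (take (i - 1) js) + length (drop i js) + 1 = length js"
  using id_take_nth_drop[of "i - 1" js] by auto

lemma step1_mono: "length js = N \<Longrightarrow> 1 \<le> i \<Longrightarrow> i \<le> N \<Longrightarrow>
  T (N + 1 - 1) (Qcomp N 1 i (Q.M js) (Q.D k)) = cmp N 1 i (M js) (T 1 (Q.D k))"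
proof -
  assume a: "length js = N" "1 \<le> i" "i \<le> N"
  define pre where "pre = take (i - 1) js"
  define post where "post = drop i js"
  have js: "js = pre @ js ! (i - 1) # post" and l1: "length pre + 1 = i"
    and l2: "length pre + length post + 1 = N"
    using split_at[of i js] a by (auto simp: pre_def post_def)
  have "Qcomp N 1 i (Q.M js) (Q.D k) = Q.M (pre @ (js ! (i - 1) + k) # post)"
    by (subst js, rule Q.M_D) (use l1 l2 in auto)
  moreover have "cmp N 1 i (M js) (D k) = M (pre @ (js ! (i - 1) + k) # post)"
    by (subst js, rule M_D) (use l1 l2 in auto)
  moreover have "T N (Q.M (pre @ (js ! (i - 1) + k) # post)) = M (pre @ (js ! (i - 1) + k) # post)"
    by (rule T_MQ) (use l2 in auto)
  ultimately show ?thesis using T_D[of k] \<open>1 \<le> i\<close> \<open>i \<le> N\<close> by (metis add_diff_cancel_right')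
qed

lemma step1: "1 \<le> N \<Longrightarrow> 1 \<le> i \<Longrightarrow> i \<le> N \<Longrightarrow> P \<in> Qc N \<Longrightarrow>
  T N (Qcomp N 1 i P (Q.D k)) = cmp N 1 i (T N P) (D k)"
proof -
  assume a: "1 \<le> N" "1 \<le> i" "i \<le> N" "P \<in> Qc N"
  have "T (N + 1 - 1) (Qcomp N 1 i P (Q.D k)) = cmp N 1 i (T N P) (T 1 (Q.D k))"
    by (rule ext_P) (use step1_mono Q.D_C a in auto)
  then show ?thesis by (simp add: T_D)
qed

lemma T_1_2: "T 2 1 = m"
proof -
  have "T 2 (Q.M [0, 0]) = M [0, 0]" by (rule T_MQ) auto
  then show ?thesis by (simp only: Q.M00 M00)
qed

lemma step2_mono: "N = length pre + length post + 1 \<Longrightarrow> i = length pre + 1 \<Longrightarrow>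
  T (N + 1) (Qcomp N 2 i (Q.M (pre @ j # post)) 1) = cmp N 2 i (M (pre @ j # post)) m"
proof (induction j)
  case 0
  have "T (N + 1) (Qcomp N 2 i (Q.M (pre @ 0 # post)) 1) = T (N + 1) (Q.M (pre @ 0 # 0 # post))"
    by (rule arg_cong[where f="T (N + 1)"], rule Q.M_m) (use 0 in auto)
  moreover have "cmp N 2 i (M (pre @ 0 # post)) m = M (pre @ 0 # 0 # post)"
    by (rule M_m) (use 0 in auto)
  moreover have "T (N + 1) (Q.M (pre @ 0 # 0 # post)) = M (pre @ 0 # 0 # post)"
    by (rule T_MQ) (use 0 in auto)
  ultimately show ?case by simp
next
  case (Suc j)
  let ?X = "Q.M (pre @ j # post) :: 'a mpoly"
  let ?Y = "Qcomp N 2 i ?X 1"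
  have N1: "1 \<le> N" and i1: "1 \<le> i" "i \<le> N" using Suc.prems by auto
  have X: "?X \<in> Qc N" using Q.M_C[of "pre @ j # post"] Suc.prems by (simp add: add.assoc)
  have Y: "?Y \<in> Qc (N + 1)" by (rule Q.cmp_C[OF _ _ _ _ X Q.m_C]) (use N1 i1 in auto)
  have MX: "M (pre @ j # post) \<in> C N" using M_C[of "pre @ j # post"] Suc.prems by (simp add: add.assoc)
  have "(Q.M (pre @ Suc j # post) :: 'a mpoly) = Qcomp N 1 i ?X (Q.D 1)"
    using Q.M_D[where 'k='a, of N pre post i j 1] Suc.prems by simp
  then have "Qcomp N 2 i (Q.M (pre @ Suc j # post)) 1 = Qcomp N 2 i (Qcomp N 1 i ?X (Var 1)) 1"
    by (simp add: Q.D1)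
  also have "\<dots> = Qcomp (N + 1) 1 i ?Y (Var 1) + Qcomp (N + 1) 1 (i + 1) ?Y (Var 1)"
    by (rule Q.leib_shift[OF N1 X i1])
  finally have "T (N + 1) (Qcomp N 2 i (Q.M (pre @ Suc j # post)) 1)
     = cmp (N + 1) 1 i (T (N + 1) ?Y) d + cmp (N + 1) 1 (i + 1) (T (N + 1) ?Y) d"
    using step1[of "N + 1" i ?Y 1] step1[of "N + 1" "i + 1" ?Y 1] Y i1
    by (simp add: T_add Q.D1 D1)
  also have "T (N + 1) ?Y = cmp N 2 i (M (pre @ j # post)) m"
    by (rule Suc.IH) (use Suc.prems in auto)
  also have "cmp (N + 1) 1 i (cmp N 2 i (M (pre @ j # post)) m) d + cmp (N + 1) 1 (i + 1) (cmp N 2 i (M (pre @ j # post)) m) d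
      = cmp N 2 i (cmp N 1 i (M (pre @ j # post)) d) m"
    by (rule leib_shift[OF N1 MX i1, symmetric])
  also have "cmp N 1 i (M (pre @ j # post)) d = M (pre @ Suc j # post)"
    using M_D[of N pre post i j 1] Suc.prems by (simp add: D1)
  finally show ?case .
qed

lemma step2: "1 \<le> N \<Longrightarrow> 1 \<le> i \<Longrightarrow> i \<le> N \<Longrightarrow> P \<in> Qc N \<Longrightarrow>
  T (N + 1) (Qcomp N 2 i P 1) = cmp N 2 i (T N P) m"
proof -
  assume a: "1 \<le> N" "1 \<le> i" "i \<le> N" "P \<in> Qc N"
  have "T (N + 2 - 1) (Qcomp N 2 i P 1) = cmp N 2 i (T N P) (T 2 1)"
  proof (rule ext_P)
    fix js :: "nat list" assume l: "length js = N"
    define pre where "pre = take (i - 1) js"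
    define post where "post = drop i js"
    have js: "js = pre @ js ! (i - 1) # post" and l1: "length pre + 1 = i"
      and l2: "length pre + length post + 1 = N"
      using split_at[of i js] a l by (auto simp: pre_def post_def)
    have "T (N + 1) (Qcomp N 2 i (Q.M (pre @ js ! (i - 1) # post)) 1) = cmp N 2 i (M (pre @ js ! (i - 1) # post)) m"
      by (rule step2_mono) (use l1 l2 in auto)
    then show "T (N + 2 - 1) (Qcomp N 2 i (Q.M js) 1) = cmp N 2 i (M js) (T 2 1)"
      using js by (simp add: T_1_2)
  qed (use a in auto)
  then show ?thesis by (simp add: T_1_2)
qed


lemma step3: "ks \<noteq> [] \<Longrightarrow> 1 \<le> N \<Longrightarrow> 1 \<le> i \<Longrightarrow> i \<le> N \<Longrightarrow> P \<in> Qc N \<Longrightarrow>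
  T (N + length ks - 1) (Qcomp N (length ks) i P (Q.M ks)) = cmp N (length ks) i (T N P) (M ks)"
proof (induction ks arbitrary: N i P)
  case (Cons k ks')
  show ?case
  proof (cases ks')
    case Nil
    then show ?thesis using step1[of N i P k] Cons.prems by simp
  next
    case (Cons k' ks'')
    then have ne: "ks' \<noteq> []" by simp
    define n where "n = length ks'"
    have n1: "1 \<le> n" using ne by (simp add: n_def len1)
    let ?R = "Q.M ks' :: 'a mpoly"
    let ?W = "Qcomp 2 n 2 1 ?R"
    let ?Y = "Qcomp N 2 i P 1"
    have N1: "1 \<le> N" and i1: "1 \<le> i" "i \<le> N" and P: "P \<in> Qc N" using Cons.prems by auto
    have R: "?R \<in> Qc n" using Q.M_C[OF ne] by (simp add: n_def)
    have W: "?W \<in> Qc (n + 1)" by (rule Q.cmp_C[OF _ _ _ _ Q.m_C R]) (use n1 in auto)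
    have Y: "?Y \<in> Qc (N + 1)" by (rule Q.cmp_C[OF _ _ _ _ P Q.m_C]) (use N1 i1 in auto)
    have Z: "Qcomp (N + 1) n (i + 1) ?Y ?R \<in> Qc (N + n)"
      by (rule Q.cmp_C[OF _ _ _ _ Y R]) (use N1 i1 n1 in auto)
    have TP: "T N P \<in> C N" by (rule T_C[OF N1])
    have MR: "M ks' \<in> C n" using M_C[OF ne] by (simp add: n_def)
    have MW: "cmp 2 n 2 m (M ks') \<in> C (n + 1)" by (rule cmp_C[OF _ _ _ _ m_C MR]) (use n1 in auto)
    have QM: "Q.M (k # ks') = Qcomp (n + 1) 1 1 ?W (Q.D k)"
      using Q.M_Cons2[where 'k='a, OF ne, of k] by (simp add: n_def)
    have MM: "M (k # ks') = cmp (n + 1) 1 1 (cmp 2 n 2 m (M ks')) (D k)"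
      using M_Cons2[OF ne, of k] by (simp add: n_def)
    have "Qcomp N (n + 1) i P (Q.M (k # ks')) = Qcomp (N + n) 1 i (Qcomp N (n + 1) i P ?W) (Q.D k)"
      unfolding QM by (rule Q.axI[symmetric, OF _ _ _ P W Q.D_C]) (use N1 i1 n1 in auto)
    also have "Qcomp N (n + 1) i P ?W = Qcomp (N + 1) n (i + 1) ?Y ?R"
      by (rule Q.axI[symmetric, OF _ _ _ P Q.m_C R]) (use N1 i1 n1 in auto)
    finally have e1: "Qcomp N (n + 1) i P (Q.M (k # ks')) = Qcomp (N + n) 1 i (Qcomp (N + 1) n (i + 1) ?Y ?R) (Q.D k)" .
    have "T (N + n) (Qcomp N (n + 1) i P (Q.M (k # ks'))) = cmp (N + n) 1 i (T (N + n) (Qcomp (N + 1) n (i + 1) ?Y ?R)) (D k)"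
      unfolding e1 by (rule step1[OF _ _ _ Z]) (use N1 i1 n1 in auto)
    also have "T (N + n) (Qcomp (N + 1) n (i + 1) ?Y ?R) = cmp (N + 1) n (i + 1) (T (N + 1) ?Y) (M ks')"
      using Cons.IH[OF ne, of "N + 1" "i + 1" ?Y] Y i1 by (simp add: n_def)
    also have "T (N + 1) ?Y = cmp N 2 i (T N P) m"
      by (rule step2[OF N1 i1 P])
    also have "cmp (N + n) 1 i (cmp (N + 1) n (i + 1) (cmp N 2 i (T N P) m) (M ks')) (D k)
       = cmp (N + n) 1 i (cmp N (n + 1) i (T N P) (cmp 2 n 2 m (M ks'))) (D k)"
      by (subst axI[OF _ _ _ TP m_C MR]) (use N1 i1 n1 in auto)
    also have "\<dots> = cmp N (n + 1) i (T N P) (M (k # ks'))"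
      unfolding MM by (rule axI[OF _ _ _ TP MW D_C]) (use N1 i1 n1 in auto)
    finally show ?thesis by (simp add: n_def)
  qed
qed simp

theorem T_comp: "1 \<le> N \<Longrightarrow> 1 \<le> Mr \<Longrightarrow> 1 \<le> i \<Longrightarrow> i \<le> N \<Longrightarrow> P \<in> Qc N \<Longrightarrow> Qv \<in> Qc Mr \<Longrightarrow>
  T (N + Mr - 1) (Qcomp N Mr i P Qv) = cmp N Mr i (T N P) (T Mr Qv)"
proof -
  assume a: "1 \<le> N" "1 \<le> Mr" "1 \<le> i" "i \<le> N" "P \<in> Qc N" "Qv \<in> Qc Mr"
  show ?thesis
  proof (rule ext_Q[OF a(1-5) _ a(6)])
    fix ks :: "nat list" assume l: "length ks = Mr"
    then have ne: "ks \<noteq> []" using a(2) by auto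
    show "T (N + Mr - 1) (Qcomp N Mr i P (Q.M ks)) = cmp N Mr i (T N P) (M ks)"
      using step3[OF ne a(1) a(3) a(4) a(5)] l by simp
  qed
qed

lemma T_one: "T 1 1 = e"
  using T_MQ[of "[0]" 1] by simp

lemma T_Var1: "T 1 (Var 1) = d"
  using T_MQ[of "[1]" 1] Q.M1[where 'k='a] M1 by simp

lemma T_hom: "ns_operad_hom poly_smult Qc 1 Qcomp sc C e cmp T"
  unfolding ns_operad_hom_def
  by (auto simp: T_C T_add T_smult T_one T_comp)

lemma hom_sum:
  assumes f: "ns_operad_hom poly_smult Qc 1 Qcomp sc C e cmp f" and n: "1 \<le> n"
    and g: "\<And>a. a \<in> A \<Longrightarrow> g a \<in> Qc n"
  shows "f n (\<Sum>a\<in>A. g a) = (\<Sum>a\<in>A. f n (g a))"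
proof -
  have hadd: "\<And>x y. x \<in> Qc n \<Longrightarrow> y \<in> Qc n \<Longrightarrow> f n (x + y) = f n x + f n y"
    using hom_add[OF f n] by blast
  have f0: "f n 0 = 0" using hadd[of 0 0] by simp
  show ?thesis using g
  proof (induction A rule: infinite_finite_induct)
    case (insert a A)
    have "f n (g a + (\<Sum>a\<in>A. g a)) = f n (g a) + f n (\<Sum>a\<in>A. g a)"
      using insert.prems by (intro hadd) (auto intro!: Qc_sum)
    then show ?case using insert by simp
  qed (auto simp: f0)
qed

lemma hom_MQ:
  assumes f: "ns_operad_hom poly_smult Qc 1 Qcomp sc C e cmp f" and fd: "f 1 (Var 1) = d" and fm: "f 2 1 = m"
  shows "js \<noteq> [] \<Longrightarrow> f (length js) (Q.M js) = M js"
proof (induction js)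
  case (Cons j ks)
  have fc: "\<And>a b x y i. 1 \<le> a \<Longrightarrow> 1 \<le> b \<Longrightarrow> 1 \<le> i \<Longrightarrow> i \<le> a \<Longrightarrow> x \<in> Qc a \<Longrightarrow> y \<in> Qc b \<Longrightarrow>
     f (a + b - 1) (Qcomp a b i x y) = cmp a b i (f a x) (f b y)"
    using hom_comp[OF f] by blast
  have f1: "f 1 1 = e" using hom_unit[OF f] .
  have fD: "f 1 (Q.D k) = D k" for k
  proof (induction k)
    case 0 then show ?case using f1 by simp
  next
    case (Suc k)
    have "f 1 (Q.D (Suc k)) = f 1 (Qcomp 1 1 1 (Var 1) (Q.D k))" by (simp only: op_pow.simps)
    also have "\<dots> = f (1 + 1 - 1) (Qcomp 1 1 1 (Var 1) (Q.D k))" by simp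
    also have "\<dots> = cmp 1 1 1 (f 1 (Var 1)) (f 1 (Q.D k))"
      by (rule fc) (auto simp: Q.d_C Q.D_C)
    finally show ?case using Suc fd by (simp del: Suc_eq_plus1)
  qed
  show ?case
  proof (cases ks)
    case Nil then show ?thesis using fD by simp
  next
    case (Cons k ks')
    then have ne: "ks \<noteq> []" by simp
    let ?R = "Q.M ks :: 'a mpoly"
    have R: "?R \<in> Qc (length ks)" by (rule Q.M_C[OF ne])
    have l1: "1 \<le> length ks" by (rule len1[OF ne])
    have W: "Qcomp 2 (length ks) 2 1 ?R \<in> Qc (length ks + 1)"
      by (rule Q.cmp_C[OF _ _ _ _ Q.m_C R]) (use l1 in auto)
    have "f (length (j # ks)) (Q.M (j # ks)) = f (length ks + 1 + 1 - 1) (Qcomp (length ks + 1) 1 1 (Qcomp 2 (length ks) 2 1 ?R) (Q.D j))"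
      using Q.M_Cons2[where 'k='a, OF ne, of j] by simp
    also have "\<dots> = cmp (length ks + 1) 1 1 (f (length ks + 1) (Qcomp 2 (length ks) 2 1 ?R)) (f 1 (Q.D j))"
      by (rule fc[OF _ _ _ _ W Q.D_C]) auto
    also have "f (length ks + 1) (Qcomp 2 (length ks) 2 1 ?R) = f (2 + length ks - 1) (Qcomp 2 (length ks) 2 1 ?R)"
      by simp
    also have "\<dots> = cmp 2 (length ks) 2 (f 2 1) (f (length ks) ?R)"
      by (rule fc[OF _ _ _ _ Q.m_C R]) (use l1 in auto)
    also have "f (length ks) ?R = M ks" using Cons.IH ne by simp
    finally show ?thesis using fm fD M_Cons2[OF ne, of j] by simp
  qed
qed simp

lemma hom_unique:
  assumes f: "ns_operad_hom poly_smult Qc 1 Qcomp sc C e cmp f" and fd: "f 1 (Var 1) = d" and fm: "f 2 1 = m"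
    and n: "1 \<le> n" and x: "x \<in> Qc n"
  shows "f n x = T n x"
proof -
  let ?c = "\<lambda>a. Poly_Mapping.lookup x a"
  let ?m = "\<lambda>a. Q.M (js_of n a) :: 'a mpoly"
  have mQ: "?m a \<in> Qc n" for a using Q.M_C[OF js_of_ne[OF n], of a] by simp
  have fsc: "\<And>c y. y \<in> Qc n \<Longrightarrow> f n (poly_smult c y) = sc c (f n y)"
    using hom_sc[OF f n] by blast
  have "f n x = f n (\<Sum>a\<in>Poly_Mapping.keys x. poly_smult (?c a) (?m a))"
    using Q_decomp[OF n x] by simp
  also have "\<dots> = (\<Sum>a\<in>Poly_Mapping.keys x. f n (poly_smult (?c a) (?m a)))"
    by (rule hom_sum[OF f n]) (simp add: mQ Q.sc_C n)
  also have "\<dots> = (\<Sum>a\<in>Poly_Mapping.keys x. sc (?c a) (M (js_of n a)))"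
    by (rule sum.cong) (auto simp: fsc mQ hom_MQ[OF f fd fm js_of_ne[OF n], simplified])
  also have "\<dots> = T n x" by (simp add: T_def)
  finally show ?thesis .
qed

end


lemma Q_presents: "presents_AsDer (poly_smult :: 'k::comm_ring_1 \<Rightarrow> 'k mpoly \<Rightarrow> 'k mpoly) Qc 1 Qcomp (Var 1) 1 (B :: 'b::ab_group_add itself)"
  unfolding presents_AsDer_def
proof (intro conjI)
  show "Var 1 \<in> Qc 1" by (rule Q.d_C)
  show "(1 :: 'k mpoly) \<in> Qc 2" by simp
  show "asder_relations Qcomp (Var 1) (1 :: 'k mpoly)" by (rule Q.rel)
  show "\<forall>(sc' :: 'k \<Rightarrow> 'b \<Rightarrow> 'b) C' e' cmp' d' m'.
       ns_operad sc' C' e' cmp' \<and> d' \<in> C' 1 \<and> m' \<in> C' 2 \<and> asder_relations cmp' d' m' \<longrightarrow>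
       (\<exists>f. ns_operad_hom poly_smult Qc 1 Qcomp sc' C' e' cmp' f \<and> f 1 (Var 1) = d' \<and> f 2 1 = m') \<and>
       (\<forall>f g. ns_operad_hom poly_smult Qc 1 Qcomp sc' C' e' cmp' f \<and> f 1 (Var 1) = d' \<and> f 2 1 = m' \<and>
               ns_operad_hom poly_smult Qc 1 Qcomp sc' C' e' cmp' g \<and> g 1 (Var 1) = d' \<and> g 2 1 = m' \<longrightarrow>
               (\<forall>n\<ge>1. \<forall>x\<in>Qc n. f n x = g n x))"
  proof (intro allI impI)
    fix sc' :: "'k \<Rightarrow> 'b \<Rightarrow> 'b" and C' e' cmp' d' m'
    assume a: "ns_operad sc' C' e' cmp' \<and> d' \<in> C' 1 \<and> m' \<in> C' 2 \<and> asder_relations cmp' d' m'"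
    interpret X: asd sc' C' e' cmp' d' m'
      using a by unfold_locales auto
    show "(\<exists>f. ns_operad_hom poly_smult Qc 1 Qcomp sc' C' e' cmp' f \<and> f 1 (Var 1) = d' \<and> f 2 1 = m') \<and>
       (\<forall>f g. ns_operad_hom poly_smult Qc 1 Qcomp sc' C' e' cmp' f \<and> f 1 (Var 1) = d' \<and> f 2 1 = m' \<and>
               ns_operad_hom poly_smult Qc 1 Qcomp sc' C' e' cmp' g \<and> g 1 (Var 1) = d' \<and> g 2 1 = m' \<longrightarrow>
               (\<forall>n\<ge>1. \<forall>x\<in>Qc n. f n x = g n x))"
    proof (rule conjI)
      show "\<exists>f. ns_operad_hom poly_smult Qc 1 Qcomp sc' C' e' cmp' f \<and> f 1 (Var 1) = d' \<and> f 2 1 = m'"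
        by (rule exI[of _ X.T]) (simp add: X.T_hom X.T_Var1 X.T_1_2)
      show "\<forall>f g. ns_operad_hom poly_smult Qc 1 Qcomp sc' C' e' cmp' f \<and> f 1 (Var 1) = d' \<and> f 2 1 = m' \<and>
               ns_operad_hom poly_smult Qc 1 Qcomp sc' C' e' cmp' g \<and> g 1 (Var 1) = d' \<and> g 2 1 = m' \<longrightarrow>
               (\<forall>n\<ge>1. \<forall>x\<in>Qc n. f n x = g n x)"
        using X.hom_unique by metis
    qed
  qed
qed


definition offs :: "(nat \<times> 'a) list \<Rightarrow> nat \<Rightarrow> nat" where
  "offs qs r = (\<Sum>t<r. fst (qs ! t))"

definition sig :: "(nat \<times> 'a) list \<Rightarrow> nat \<Rightarrow> 'k::comm_ring_1 mpoly" where
  "sig qs v = (if 1 \<le> v \<and> v \<le> length qs then (\<Sum>j\<in>{offs qs (v - 1) + 1..offs qs v}. Var j)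
               else Var (offs qs (length qs) + v - length qs))"

lemma offs_append: "r \<le> length qs \<Longrightarrow> offs (qs @ xs) r = offs qs r"
  unfolding offs_def by (rule sum.cong) (auto simp: nth_append)

lemma offs_Suc: "offs qs (Suc r) = offs qs r + fst (qs ! r)"
  by (simp add: offs_def)

lemma full_comp_gen:
  fixes P :: "'k::comm_ring_1 mpoly" and qs :: "(nat \<times> 'k mpoly) list"
  shows "length qs \<le> a \<Longrightarrow> 1 \<le> a \<Longrightarrow> P \<in> Qc a \<Longrightarrow> (\<forall>q\<in>set qs. 1 \<le> fst q \<and> snd q \<in> Qc (fst q)) \<Longrightarrow>
   full_comp_aux Qcomp a P (rev qs) =
     subst (sig qs) P * (\<Prod>t<length qs. subst (\<lambda>v. Var (offs qs t + v)) (snd (qs ! t)))"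
proof (induction qs arbitrary: a P rule: rev_induct)
  case Nil
  have "subst (sig ([] :: (nat \<times> 'k mpoly) list)) P = P" by (rule subst_Var_id') (auto simp: sig_def offs_def)
  then show ?case by simp
next
  case (snoc x qs')
  obtain m Q where x: "x = (m, Q)" by (cases x)
  let ?r = "length qs'"
  let ?qs = "qs' @ [x]"
  have m: "1 \<le> m" and Q: "Q \<in> Qc m" using snoc.prems(4) x by auto
  have r: "?r + 1 \<le> a" using snoc.prems(1) by simp
  have P': "Qcomp a m (?r + 1) P Q \<in> Qc (a + m - 1)"
    by (rule Qcomp_Qc[OF snoc.prems(3) Q]) (use r m in auto)
  have IH: "full_comp_aux Qcomp (a + m - 1) (Qcomp a m (?r + 1) P Q) (rev qs') =
     subst (sig qs') (Qcomp a m (?r + 1) P Q) * (\<Prod>t<?r. subst (\<lambda>v. Var (offs qs' t + v)) (snd (qs' ! t)))"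
    by (rule snoc.IH[OF _ _ P']) (use snoc.prems r m in auto)
  have off_eq: "offs ?qs t = offs qs' t" if "t \<le> ?r" for t using offs_append that by blast
  have off_r1: "offs ?qs (?r + 1) = offs qs' ?r + m"
    using offs_Suc[of ?qs ?r] off_eq[of ?r] x by (simp add: nth_append Suc_eq_plus1)
  have A: "subst (sig qs') (rho m (?r + 1) v) = (sig ?qs v :: 'k mpoly)" if "1 \<le> v" "v \<le> a" for v
  proof -
    consider "v \<le> ?r" | "v = ?r + 1" | "v > ?r + 1" by linarith
    then show ?thesis
    proof cases
      case 1
      then show ?thesis using that off_eq[of v] off_eq[of "v - 1"] by (simp add: rho_def sig_def)
    next
      case 2
      have "subst (sig qs') (rho m (?r + 1) v) = (\<Sum>t<m. sig qs' (?r + 1 + t) :: 'k mpoly)"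
        using 2 by (simp add: rho_def subst_sum)
      also have "\<dots> = (\<Sum>t<m. Var (offs qs' ?r + 1 + t))"
        by (rule sum.cong) (auto simp: sig_def add.assoc)
      also have "\<dots> = sum Var {offs qs' ?r + 1..offs qs' ?r + 1 + m - 1}"
        by (rule block_sum[symmetric]) simp
      also have "\<dots> = sig ?qs v"
        using 2 off_eq[of ?r] off_r1 m by (simp add: sig_def)
      finally show ?thesis .
    next
      case 3
      then have "\<not> v + m - 1 \<le> ?r" "\<not> v \<le> ?r + 1"
        "offs qs' ?r + (v + m - 1) - ?r = offs qs' ?r + m + v - (?r + 1)" using m by auto
      then show ?thesis using 3 off_r1 by (simp add: rho_def sig_def Suc_eq_plus1)
    qed
  qed
  have B: "subst (sig qs') (shv (?r + 1) v) = (Var (offs ?qs ?r + v) :: 'k mpoly)" if "1 \<le> v" "v \<le> m" for v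
  proof -
    have "\<not> v + ?r \<le> ?r" "offs qs' ?r + (v + ?r) - ?r = offs qs' ?r + v" using that by auto
    then show ?thesis using off_eq[of ?r] by (simp add: shv_def sig_def)
  qed
  have "subst (sig qs') (Qcomp a m (?r + 1) P Q) =
     subst (\<lambda>v. subst (sig qs') (rho m (?r + 1) v)) P * subst (\<lambda>v. subst (sig qs') (shv (?r + 1) v)) Q"
    by (simp add: Qcomp_eq subst_mult subst_subst)
  also have "\<dots> = subst (sig ?qs) P * subst (\<lambda>v. Var (offs ?qs ?r + v)) Q"
  proof -
    have "subst (\<lambda>v. subst (sig qs') (rho m (?r + 1) v)) P = subst (sig ?qs) P"
      by (rule subst_cong_Qc[OF snoc.prems(3)]) (simp add: A)
    moreover have "subst (\<lambda>v. subst (sig qs') (shv (?r + 1) v)) Q = subst (\<lambda>v. Var (offs ?qs ?r + v)) Q"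
      by (rule subst_cong_Qc[OF Q]) (simp add: B)
    ultimately show ?thesis by simp
  qed
  finally have S: "subst (sig qs') (Qcomp a m (?r + 1) P Q) = subst (sig ?qs) P * subst (\<lambda>v. Var (offs ?qs ?r + v)) Q" .
  have Pr: "(\<Prod>t<?r. subst (\<lambda>v. Var (offs qs' t + v)) (snd (qs' ! t))) =
     (\<Prod>t<?r. subst (\<lambda>v. Var (offs ?qs t + v)) (snd (?qs ! t)))"
    by (rule prod.cong) (auto simp: off_eq nth_append)
  have "full_comp_aux Qcomp a P (rev ?qs) = full_comp_aux Qcomp (a + m - 1) (Qcomp a m (?r + 1) P Q) (rev qs')"
    by (simp add: x)
  also have "\<dots> = subst (sig ?qs) P * subst (\<lambda>v. Var (offs ?qs ?r + v)) Q *
      (\<Prod>t<?r. subst (\<lambda>v. Var (offs ?qs t + v)) (snd (?qs ! t)))"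
    using IH S Pr by simp
  also have "\<dots> = subst (sig ?qs) P * (\<Prod>t<length ?qs. subst (\<lambda>v. Var (offs ?qs t + v)) (snd (?qs ! t)))"
    by (simp add: x mult_ac)
  finally show ?case .
qed

lemma prod_1k: "(\<Prod>r\<in>{1..(k::nat)}. f (r - 1)) = (\<Prod>t<k. f t :: 'a::comm_monoid_mult)"
proof -
  have "(\<Prod>r\<in>{Suc 0..k}. f (r - 1)) = (\<Prod>t<k. f (Suc t - 1))" by (rule prod.atLeast1_atMost_eq)
  then show ?thesis by (simp add: One_nat_def)
qed

lemma part3:
  "\<forall>k (P :: 'k::comm_ring_1 mpoly) (qs :: (nat \<times> 'k mpoly) list).
          1 \<le> k \<and> P \<in> Qc k \<and> length qs = k \<and> (\<forall>q\<in>set qs. 1 \<le> fst q \<and> snd q \<in> Qc (fst q)) \<longrightarrow>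
          (let off = (\<lambda>r. \<Sum>t<r. fst (qs ! t)) in
           full_comp Qcomp k P qs =
             subst (\<lambda>r. \<Sum>j\<in>{off (r - 1) + 1..off r}. Var j) P
             * (\<Prod>r\<in>{1..k}. subst (\<lambda>v. Var (off (r - 1) + v)) (snd (qs ! (r - 1)))))"
proof (intro allI impI)
  fix k and P :: "'k mpoly" and qs :: "(nat \<times> 'k mpoly) list"
  assume a: "1 \<le> k \<and> P \<in> Qc k \<and> length qs = k \<and> (\<forall>q\<in>set qs. 1 \<le> fst q \<and> snd q \<in> Qc (fst q))"
  have off: "(\<lambda>r. \<Sum>t<r. fst (qs ! t)) = offs qs" by (simp add: offs_def fun_eq_iff)
  have g: "full_comp Qcomp k P qs = subst (sig qs) P * (\<Prod>t<length qs. subst (\<lambda>v. Var (offs qs t + v)) (snd (qs ! t)))"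
    unfolding full_comp_def by (rule full_comp_gen) (use a in auto)
  have "subst (sig qs) P = subst (\<lambda>r. \<Sum>j\<in>{offs qs (r - 1) + 1..offs qs r}. Var j) P"
    by (rule subst_cong_Qc[of P k]) (use a in \<open>auto simp: sig_def\<close>)
  moreover have "(\<Prod>t<length qs. subst (\<lambda>v. Var (offs qs t + v)) (snd (qs ! t))) =
     (\<Prod>r\<in>{1..k}. subst (\<lambda>v. Var (offs qs (r - 1) + v)) (snd (qs ! (r - 1))))"
    using a prod_1k[of "\<lambda>t. subst (\<lambda>v. Var (offs qs t + v)) (snd (qs ! t))" k] by simp
  ultimately show "let off = (\<lambda>r. \<Sum>t<r. fst (qs ! t)) in
           full_comp Qcomp k P qs =
             subst (\<lambda>r. \<Sum>j\<in>{off (r - 1) + 1..off r}. Var j) P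
             * (\<Prod>r\<in>{1..k}. subst (\<lambda>v. Var (off (r - 1) + v)) (snd (qs ! (r - 1))))"
    unfolding off Let_def using g by simp
qed

lemma mu_n_Q2: "mu_n Qcomp (1 :: 'k::comm_ring_1 mpoly) 1 n = 1 \<and> mu_n Qcomp (1 :: 'k mpoly) 1 (Suc n) = 1"
  by (induction n) (auto simp: Qcomp_eq)

lemma mu_n_Q: "mu_n Qcomp (1 :: 'k::comm_ring_1 mpoly) 1 n = 1"
  using mu_n_Q2 by blast

lemma part4:
  "\<forall>js :: nat list. 1 \<le> length js \<longrightarrow>
          full_comp Qcomp (length js) (mu_n Qcomp (1 :: 'k::comm_ring_1 mpoly) 1 (length js))
              (map (\<lambda>j. (1, op_pow Qcomp 1 (Var 1) j)) js)
          = (\<Prod>r\<in>{1..length js}. Var r ^ (js ! (r - 1)))"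
proof (intro allI impI)
  fix js :: "nat list"
  assume l: "1 \<le> length js"
  let ?qs = "map (\<lambda>j. (1, op_pow Qcomp 1 (Var 1) j)) js :: (nat \<times> 'k mpoly) list"
  have valid: "\<forall>q\<in>set ?qs. 1 \<le> fst q \<and> snd q \<in> Qc (fst q)"
    using Q.D_C by auto
  have off: "(\<Sum>t<r. fst (?qs ! t)) = r" if "r \<le> length js" for r
    using that by (induction r) auto
  have "full_comp Qcomp (length js) 1 ?qs =
     subst (\<lambda>r. \<Sum>j\<in>{(\<Sum>t<r - 1. fst (?qs ! t)) + 1..(\<Sum>t<r. fst (?qs ! t))}. Var j) 1
     * (\<Prod>r\<in>{1..length js}. subst (\<lambda>v. Var ((\<Sum>t<r - 1. fst (?qs ! t)) + v)) (snd (?qs ! (r - 1))))"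
    using part3[rule_format, of "length js" 1 ?qs] l valid by (simp add: Let_def)
  also have "\<dots> = (\<Prod>r\<in>{1..length js}. Var r ^ (js ! (r - 1)))"
  proof -
    have "subst (\<lambda>v. Var ((\<Sum>t<r - 1. fst (?qs ! t)) + v)) (snd (?qs ! (r - 1))) = Var r ^ (js ! (r - 1))"
      if "r \<in> {1..length js}" for r
    proof -
      have "(\<Sum>t<r - 1. fst (?qs ! t)) = r - 1" using that off[of "r - 1"] by auto
      moreover have "snd (?qs ! (r - 1)) = Var 1 ^ (js ! (r - 1))"
      proof -
        have "r - 1 < length js" using that by auto
        then show ?thesis by (simp add: QD)
      qed
      moreover have "subst (\<lambda>v. Var (r - 1 + v)) (Var 1 ^ (js ! (r - 1))) = (Var r ^ (js ! (r - 1)) :: 'k mpoly)"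
        using that by (simp add: subst_power)
      ultimately show ?thesis by simp
    qed
    then have "(\<Prod>r\<in>{1..length js}. subst (\<lambda>v. Var ((\<Sum>t<r - 1. fst (?qs ! t)) + v)) (snd (?qs ! (r - 1))))
       = (\<Prod>r\<in>{1..length js}. Var r ^ (js ! (r - 1)))"
      by (intro prod.cong refl) auto
    then show ?thesis by simp
  qed
  finally show "full_comp Qcomp (length js) (mu_n Qcomp (1 :: 'k mpoly) 1 (length js)) ?qs
      = (\<Prod>r\<in>{1..length js}. Var r ^ (js ! (r - 1)))" by (simp add: mu_n_Q)
qed

theorem theorem2p2:
  fixes B :: "'b::ab_group_add itself"
  shows
    \<comment> \<open>(Q_n) with the partial compositions is an ns operad with unit 1 \<in> K[x_1]\<close>
    "ns_operad (poly_smult :: 'k::comm_ring_1 \<Rightarrow> 'k mpoly \<Rightarrow> 'k mpoly) Qc 1 Qcomp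
     \<comment> \<open>AsDer \<cong> Q via id \<mapsto> 1, D \<mapsto> x_1, \<mu> \<mapsto> 1 \<in> K[x_1,x_2] (universal property)\<close>
     \<and> presents_AsDer (poly_smult :: 'k::comm_ring_1 \<Rightarrow> 'k mpoly \<Rightarrow> 'k mpoly) Qc 1 Qcomp (Var 1) 1 B
     \<comment> \<open>formula for the full composition\<close>
     \<and> (\<forall>k (P :: 'k mpoly) (qs :: (nat \<times> 'k mpoly) list).
          1 \<le> k \<and> P \<in> Qc k \<and> length qs = k \<and> (\<forall>q\<in>set qs. 1 \<le> fst q \<and> snd q \<in> Qc (fst q)) \<longrightarrow>
          (let off = (\<lambda>r. \<Sum>t<r. fst (qs ! t)) in
           full_comp Qcomp k P qs =
             subst (\<lambda>r. \<Sum>j\<in>{off (r - 1) + 1..off r}. Var j) P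
             * (\<Prod>r\<in>{1..k}. subst (\<lambda>v. Var (off (r - 1) + v)) (snd (qs ! (r - 1))))))
     \<comment> \<open>\<mu>_n \<circ> (D^j_1, ..., D^j_n) corresponds to x_1^j_1 ... x_n^j_n\<close>
     \<and> (\<forall>js :: nat list. 1 \<le> length js \<longrightarrow>
          full_comp Qcomp (length js) (mu_n Qcomp (1 :: 'k mpoly) 1 (length js))
              (map (\<lambda>j. (1, op_pow Qcomp 1 (Var 1) j)) js)
          = (\<Prod>r\<in>{1..length js}. Var r ^ (js ! (r - 1))))"
  using Q_operad Q_presents part3 part4 by blast

end
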